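(* Let $a>0$, $b\ge0$, $\delta>0$, and assume $A:=a+\beta-1>0$. Then $$\limsup_{N\to\infty}N^{-\chi\beta+bA}\,\mathbb E\Big[\sum_{k=1}^N w_{I^N_k}^a\,\mathbf 1\{w_{I^N_k}\le \delta N^{-b}\}\Big]\le(1-\beta)\frac{\delta^A}{A}.$$ The same holds if $I^N$ is replaced by $J^N$, $N$ i.i.d. draws with replacement from $\{1,\dots,\lceil N^\gamma\rceil\}$ with $\mathbb P(J^N_k=i\mid\Xi)=w_i^\beta/\sum_{j=1}^{\lceil N^\gamma\rceil}w_j^\beta$.
   Context: Fix $\gamma>1$, $\beta\in(0,1)$, $\chi=\frac{1-\gamma(1-\beta)}{\beta}$ (so $\chi\beta=1-\gamma(1-\beta)$). $\Xi$ is a Poisson point process on $(0,\infty)$ with intensity $x^{-2}dx$ and atoms $w_1>w_2>\cdots$. Conditionally on $\Xi$, $I^N=(I^N_1,\dots,I^N_N)$ are $N$ indices sampled without replacement from $\{1,\dots,\lceil N^\gamma\rceil\}$ with weights $w_i^\beta$ (each successive draw picks a not-yet-drawn index $i$ with probability proportional to $w_i^\beta$ among the not-yet-drawn ones). *)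

theory Defs
  imports "HOL-Probability.Probability"
begin

definition inv_sq_intensity :: "real measure" where
  "inv_sq_intensity = density lborel (\<lambda>x. ennreal (indicator {0<..} x / x\<^sup>2))"

definition poisson_point_process :: "'a measure \<Rightarrow> ('a \<Rightarrow> real set) \<Rightarrow> real measure \<Rightarrow> bool" where
  "poisson_point_process M Xi mu \<longleftrightarrow>
     (\<forall>\<omega>\<in>space M. Xi \<omega> \<subseteq> {0<..}) \<and>
     (\<forall>B. B \<in> sets borel \<and> B \<subseteq> {0<..} \<and> emeasure mu B < \<infinity> \<longrightarrow>
        (AE \<omega> in M. finite (Xi \<omega> \<inter> B)) \<and>
        (\<lambda>\<omega>. card (Xi \<omega> \<inter> B)) \<in> measurable M (count_space UNIV) \<and>
        (\<forall>k::nat. measure M {\<omega> \<in> space M. card (Xi \<omega> \<inter> B) = k}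
              = exp (- measure mu B) * measure mu B ^ k / fact k)) \<and>
     (\<forall>(n::nat) (B::nat \<Rightarrow> real set).
        disjoint_family_on B {..<n} \<and>
        (\<forall>i<n. B i \<in> sets borel \<and> B i \<subseteq> {0<..} \<and> emeasure mu (B i) < \<infinity>) \<longrightarrow>
        prob_space.indep_vars M (\<lambda>_. count_space UNIV) (\<lambda>i \<omega>. card (Xi \<omega> \<inter> B i)) {..<n})"

text \<open>The i-th largest atom (1-indexed): w_1 > w_2 > ...\<close>
definition desc_atom :: "real set \<Rightarrow> nat \<Rightarrow> real" where
  "desc_atom X i = (THE x. x \<in> X \<and> finite {y \<in> X. x < y} \<and> card {y \<in> X. x < y} + 1 = i)"

text \<open>Sampling N indices from {1..m} without replacement with weights w_i^beta:
  probability of the ordered outcome xs.\<close>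
definition wor_lists :: "nat \<Rightarrow> nat \<Rightarrow> nat list set" where
  "wor_lists m N = {xs. length xs = N \<and> distinct xs \<and> set xs \<subseteq> {1..m}}"

definition wor_prob :: "(nat \<Rightarrow> real) \<Rightarrow> real \<Rightarrow> nat \<Rightarrow> nat list \<Rightarrow> real" where
  "wor_prob w \<beta> m xs = (\<Prod>k<length xs. w (xs ! k) powr \<beta> /
       ((\<Sum>j=1..m. w j powr \<beta>) - (\<Sum>l<k. w (xs ! l) powr \<beta>)))"

definition wr_lists :: "nat \<Rightarrow> nat \<Rightarrow> nat list set" where
  "wr_lists m N = {xs. length xs = N \<and> set xs \<subseteq> {1..m}}"

definition wr_prob :: "(nat \<Rightarrow> real) \<Rightarrow> real \<Rightarrow> nat \<Rightarrow> nat list \<Rightarrow> real" where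
  "wr_prob w \<beta> m xs = (\<Prod>k<length xs. w (xs ! k) powr \<beta> / (\<Sum>j=1..m. w j powr \<beta>))"

end

theory Submission
  imports Defs
begin

definition Lw :: "'b set \<Rightarrow> nat \<Rightarrow> 'b list set" where
  "Lw R n = {xs. length xs = n \<and> distinct xs \<and> set xs \<subseteq> R}"
definition Lr :: "'b set \<Rightarrow> nat \<Rightarrow> 'b list set" where
  "Lr R n = {xs. length xs = n \<and> set xs \<subseteq> R}"
definition Qw :: "('b \<Rightarrow> real) \<Rightarrow> real \<Rightarrow> 'b list \<Rightarrow> real" where
  "Qw p T xs = (\<Prod>k<length xs. p (xs ! k) / (T - (\<Sum>l<k. p (xs ! l))))"

lemma Lw_finite: "finite R \<Longrightarrow> finite (Lw R n)"
  unfolding Lw_def by (rule finite_subset[OF _ finite_lists_length_eq[of R n]]) auto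
lemma Lr_finite: "finite R \<Longrightarrow> finite (Lr R n)"
  unfolding Lr_def by (rule finite_subset[OF _ finite_lists_length_eq[of R n]]) auto

lemma Lw_0: "Lw R 0 = {[]}" by (auto simp: Lw_def)
lemma Lr_0: "Lr R 0 = {[]}" by (auto simp: Lr_def)

lemma Lw_Suc: "Lw R (Suc n) = (\<lambda>(x,ys). x#ys) ` (SIGMA x:R. Lw (R-{x}) n)"
proof safe
  fix xs assume "xs \<in> Lw R (Suc n)"
  then obtain x ys where xs: "xs = x#ys" unfolding Lw_def by (cases xs) auto
  with \<open>xs \<in> Lw R (Suc n)\<close> show "xs \<in> (\<lambda>(x,ys). x#ys) ` (SIGMA x:R. Lw (R-{x}) n)"
    by (auto simp: Lw_def intro!: image_eqI[of _ _ "(x,ys)"])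
qed (auto simp: Lw_def)

lemma Lr_Suc: "Lr R (Suc n) = (\<lambda>(x,ys). x#ys) ` (R \<times> Lr R n)"
proof safe
  fix xs assume "xs \<in> Lr R (Suc n)"
  then obtain x ys where xs: "xs = x#ys" unfolding Lr_def by (cases xs) auto
  with \<open>xs \<in> Lr R (Suc n)\<close> show "xs \<in> (\<lambda>(x,ys). x#ys) ` (R \<times> Lr R n)"
    by (auto simp: Lr_def intro!: image_eqI[of _ _ "(x,ys)"])
qed (auto simp: Lr_def)

lemma sum_Lw_Suc:
  assumes "finite R"
  shows "(\<Sum>xs\<in>Lw R (Suc n). F xs) = (\<Sum>x\<in>R. \<Sum>ys\<in>Lw (R-{x}) n. F (x#ys))"
proof -
  have inj: "inj_on (\<lambda>(x,ys). x#ys) (SIGMA x:R. Lw (R-{x}) n)" by (auto simp: inj_on_def)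
  show ?thesis unfolding Lw_Suc
    apply (subst sum.reindex[OF inj])
    apply (subst sum.Sigma)
    using assms by (auto simp: Lw_finite comp_def intro!: sum.cong split: prod.split)
qed

lemma sum_Lr_Suc:
  assumes "finite R"
  shows "(\<Sum>xs\<in>Lr R (Suc n). F xs) = (\<Sum>x\<in>R. \<Sum>ys\<in>Lr R n. F (x#ys))"
proof -
  have inj: "inj_on (\<lambda>(x,ys). x#ys) (R \<times> Lr R n)" by (auto simp: inj_on_def)
  show ?thesis unfolding Lr_Suc
    apply (subst sum.reindex[OF inj])
    apply (subst sum.Sigma)
    using assms by (auto simp: Lr_finite comp_def intro!: sum.cong split: prod.split)
qed

lemma sum_lessThan_Cons: "(\<Sum>k<Suc n. g ((x#ys)!k)) = g x + (\<Sum>k<n. g (ys!k))"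
  by (simp add: sum.lessThan_Suc_shift del: sum.lessThan_Suc)

lemma Qw_Cons: "Qw p T (x#ys) = p x / T * Qw p (T - p x) ys"
proof -
  have "Qw p T (x#ys) = p x / T * (\<Prod>k<length ys. p (ys!k) / (T - (\<Sum>l<Suc k. p ((x#ys) ! l))))"
    unfolding Qw_def by (simp add: prod.lessThan_Suc_shift del: prod.lessThan_Suc sum.lessThan_Suc)
  also have "\<dots> = p x / T * Qw p (T - p x) ys"
    unfolding Qw_def sum_lessThan_Cons by (simp add: algebra_simps)
  finally show ?thesis .
qed

lemma prod_lessThan_Cons: "(\<Prod>k<Suc n. g ((x#ys)!k)) = g x * (\<Prod>k<n. g (ys!k))"
  by (simp add: prod.lessThan_Suc_shift del: prod.lessThan_Suc)

lemma Qw_nonneg_sum: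
  assumes "finite R" "\<And>x. x \<in> R \<Longrightarrow> p x \<ge> 0"
  shows "(\<forall>xs\<in>Lw R n. Qw p (sum p R) xs \<ge> 0) \<and> (\<Sum>xs\<in>Lw R n. Qw p (sum p R) xs) \<le> 1"
  using assms
proof (induction n arbitrary: R)
  case 0
  then show ?case by (simp add: Lw_0 Qw_def)
next
  case (Suc n)
  have fin: "finite (R - {x})" for x using Suc.prems by auto
  have sR: "x \<in> R \<Longrightarrow> sum p R - p x = sum p (R - {x})" for x
    using Suc.prems(1) by (simp add: sum_diff1)
  have IH: "x \<in> R \<Longrightarrow> (\<forall>xs\<in>Lw (R-{x}) n. Qw p (sum p (R-{x})) xs \<ge> 0) \<and>
      (\<Sum>xs\<in>Lw (R-{x}) n. Qw p (sum p (R-{x})) xs) \<le> 1" for x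
    using Suc.IH[of "R-{x}"] Suc.prems by auto
  have S0: "sum p R \<ge> 0" using Suc.prems by (simp add: sum_nonneg)
  show ?case
  proof
    show "\<forall>xs\<in>Lw R (Suc n). 0 \<le> Qw p (sum p R) xs"
    proof
      fix xs assume "xs \<in> Lw R (Suc n)"
      then obtain x ys where "x \<in> R" "ys \<in> Lw (R-{x}) n" "xs = x#ys" unfolding Lw_Suc by auto
      then show "0 \<le> Qw p (sum p R) xs" using IH[of x] sR[of x] S0 Suc.prems
        by (auto simp: Qw_Cons)
    qed
    have "(\<Sum>xs\<in>Lw R (Suc n). Qw p (sum p R) xs)
        = (\<Sum>x\<in>R. p x / sum p R * (\<Sum>ys\<in>Lw (R-{x}) n. Qw p (sum p (R-{x})) ys))"
      using Suc.prems by (auto simp: sum_Lw_Suc Qw_Cons sR sum_distrib_left intro!: sum.cong)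
    also have "\<dots> \<le> (\<Sum>x\<in>R. p x / sum p R)"
      using IH S0 Suc.prems by (intro sum_mono mult_left_le) auto
    also have "\<dots> \<le> 1"
      using S0 by (cases "sum p R = 0") (auto simp: sum_divide_distrib[symmetric])
    finally show "(\<Sum>xs\<in>Lw R (Suc n). Qw p (sum p R) xs) \<le> 1" .
  qed
qed

lemma Qw_bound:
  assumes "finite R" "\<And>x. x \<in> R \<Longrightarrow> p x \<ge> 0" "\<And>x. x \<in> R \<Longrightarrow> g x \<ge> 0" "L > 0"
    "\<And>D. D \<subseteq> R \<Longrightarrow> card D < n \<Longrightarrow> L \<le> sum p (R - D)"
  shows "(\<Sum>xs\<in>Lw R n. Qw p (sum p R) xs * (\<Sum>k<n. g (xs!k))) \<le> n * (\<Sum>x\<in>R. p x * g x) / L"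
  using assms
proof (induction n arbitrary: R)
  case 0
  then show ?case by (simp add: Lw_0 Qw_def)
next
  case (Suc n)
  have sR: "x \<in> R \<Longrightarrow> sum p R - p x = sum p (R - {x})" for x
    using Suc.prems(1) by (simp add: sum_diff1)
  have S0: "sum p R \<ge> L" using Suc.prems(5)[of "{}"] by simp
  have Spos: "sum p R > 0" using S0 Suc.prems(4) by simp
  have PG: "(\<Sum>x\<in>R. p x * g x) \<ge> 0" using Suc.prems(2,3) by (auto intro!: sum_nonneg)
  have IH: "x \<in> R \<Longrightarrow> (\<Sum>ys\<in>Lw (R-{x}) n. Qw p (sum p (R-{x})) ys * (\<Sum>k<n. g (ys!k)))
       \<le> n * (\<Sum>y\<in>R-{x}. p y * g y) / L" for x
  proof (rule Suc.IH)
    fix D assume "x \<in> R" "D \<subseteq> R - {x}" "card D < n"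
    moreover have "finite D" using \<open>D \<subseteq> R - {x}\<close> Suc.prems(1) finite_subset by blast
    moreover have "x \<notin> D" using \<open>D \<subseteq> R - {x}\<close> by auto
    ultimately have "card (insert x D) < Suc n" "insert x D \<subseteq> R" by auto
    then have "L \<le> sum p (R - insert x D)" by (rule Suc.prems(5)[rotated])
    moreover have "R - {x} - D = R - insert x D" by blast
    ultimately show "L \<le> sum p (R - {x} - D)" by simp
  qed (use Suc.prems(1-4) in auto)
  have IH2: "x \<in> R \<Longrightarrow> (\<forall>ys\<in>Lw (R-{x}) n. Qw p (sum p (R-{x})) ys \<ge> 0) \<and>
     (\<Sum>ys\<in>Lw (R-{x}) n. Qw p (sum p (R-{x})) ys) \<le> 1" for x
  proof -
    have "finite (R-{x})" using Suc.prems(1) by simp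
    moreover have "\<And>y. y \<in> R-{x} \<Longrightarrow> p y \<ge> 0" using Suc.prems(2) by simp
    ultimately show ?thesis by (rule Qw_nonneg_sum)
  qed
  have "(\<Sum>xs\<in>Lw R (Suc n). Qw p (sum p R) xs * (\<Sum>k<Suc n. g (xs!k)))
      = (\<Sum>x\<in>R. p x / sum p R * (g x * (\<Sum>ys\<in>Lw (R-{x}) n. Qw p (sum p (R-{x})) ys)
          + (\<Sum>ys\<in>Lw (R-{x}) n. Qw p (sum p (R-{x})) ys * (\<Sum>k<n. g (ys!k)))))"
  proof -
    have "(\<Sum>xs\<in>Lw R (Suc n). Qw p (sum p R) xs * (\<Sum>k<Suc n. g (xs!k)))
      = (\<Sum>x\<in>R. \<Sum>ys\<in>Lw (R-{x}) n. Qw p (sum p R) (x#ys) * (\<Sum>k<Suc n. g ((x#ys)!k)))"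
      by (rule sum_Lw_Suc[OF Suc.prems(1)])
    also have "\<dots> = (\<Sum>x\<in>R. \<Sum>ys\<in>Lw (R-{x}) n. p x / sum p R * (g x * Qw p (sum p (R-{x})) ys
           + Qw p (sum p (R-{x})) ys * (\<Sum>k<n. g (ys!k))))"
    proof (rule sum.cong[OF refl], rule sum.cong[OF refl])
      fix x ys assume "x \<in> R"
      then show "Qw p (sum p R) (x#ys) * (\<Sum>k<Suc n. g ((x#ys)!k)) = p x / sum p R * (g x * Qw p (sum p (R-{x})) ys
           + Qw p (sum p (R-{x})) ys * (\<Sum>k<n. g (ys!k)))"
        unfolding Qw_Cons sum_lessThan_Cons sR[OF \<open>x \<in> R\<close>] by (simp add: algebra_simps add_divide_distrib)
    qed
    also have "\<dots> = (\<Sum>x\<in>R. p x / sum p R * (g x * (\<Sum>ys\<in>Lw (R-{x}) n. Qw p (sum p (R-{x})) ys)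
          + (\<Sum>ys\<in>Lw (R-{x}) n. Qw p (sum p (R-{x})) ys * (\<Sum>k<n. g (ys!k)))))"
      by (simp only: sum_distrib_left[symmetric] sum.distrib)
    finally show ?thesis .
  qed
  also have "\<dots> \<le> (\<Sum>x\<in>R. p x / sum p R * (g x + n * (\<Sum>y\<in>R. p y * g y) / L))"
  proof (intro sum_mono mult_left_mono add_mono)
    fix x assume x: "x \<in> R"
    show "g x * (\<Sum>ys\<in>Lw (R-{x}) n. Qw p (sum p (R-{x})) ys) \<le> g x"
      using IH2[OF x] Suc.prems(3)[OF x] by (intro mult_left_le) auto
    have "(\<Sum>y\<in>R-{x}. p y * g y) \<le> (\<Sum>y\<in>R. p y * g y)"
      using Suc.prems(1-3) by (intro sum_mono2) auto
    then have "n * (\<Sum>y\<in>R-{x}. p y * g y) / L \<le> n * (\<Sum>y\<in>R. p y * g y) / L"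
      using Suc.prems(4) by (intro divide_right_mono mult_left_mono) auto
    then show "(\<Sum>ys\<in>Lw (R-{x}) n. Qw p (sum p (R-{x})) ys * (\<Sum>k<n. g (ys!k)))
         \<le> n * (\<Sum>y\<in>R. p y * g y) / L" using IH[OF x] by linarith
    show "0 \<le> p x / sum p R" using Suc.prems(2)[OF x] Spos by simp
  qed
  also have "\<dots> = (\<Sum>x\<in>R. p x * g x) / sum p R + n * (\<Sum>y\<in>R. p y * g y) / L"
  proof -
    let ?C = "n * (\<Sum>y\<in>R. p y * g y) / L"
    have "(\<Sum>x\<in>R. p x / sum p R * (g x + ?C)) = (\<Sum>x\<in>R. p x * g x / sum p R) + (\<Sum>x\<in>R. p x / sum p R) * ?C"
      unfolding distrib_left sum.distrib sum_distrib_right[symmetric] by simp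
    also have "(\<Sum>x\<in>R. p x / sum p R) = 1" using Spos by (simp add: sum_divide_distrib[symmetric])
    also have "(\<Sum>x\<in>R. p x * g x / sum p R) = (\<Sum>x\<in>R. p x * g x) / sum p R"
      by (simp add: sum_divide_distrib)
    finally show ?thesis by simp
  qed
  also have "\<dots> \<le> (\<Sum>x\<in>R. p x * g x) / L + n * (\<Sum>y\<in>R. p y * g y) / L"
    using S0 Suc.prems(4) PG by (intro add_right_mono divide_left_mono) auto
  also have "\<dots> = Suc n * (\<Sum>x\<in>R. p x * g x) / L" by (simp add: add_divide_distrib[symmetric] algebra_simps)
  finally show ?case .
qed

lemma Qw_bound2:
  fixes g :: "'b \<Rightarrow> real"
  assumes "finite R" "\<And>x. x \<in> R \<Longrightarrow> p x \<ge> 0" "\<And>x. x \<in> R \<Longrightarrow> g x \<le> G" "G \<ge> 0"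
  shows "(\<Sum>xs\<in>Lw R n. Qw p (sum p R) xs * (\<Sum>k<n. g (xs!k))) \<le> n * G"
proof -
  have Q: "(\<Sum>xs\<in>Lw R n. Qw p (sum p R) xs) \<le> 1" "\<And>xs. xs\<in>Lw R n \<Longrightarrow> Qw p (sum p R) xs \<ge> 0"
    using Qw_nonneg_sum[OF assms(1,2)] by auto
  have "(\<Sum>xs\<in>Lw R n. Qw p (sum p R) xs * (\<Sum>k<n. g (xs!k))) \<le> (\<Sum>xs\<in>Lw R n. Qw p (sum p R) xs * (n * G))"
  proof (intro sum_mono mult_left_mono Q(2))
    fix xs assume xs: "xs \<in> Lw R n"
    have "(\<Sum>k<n. g (xs!k)) \<le> (\<Sum>k<n. G)"
      using xs by (intro sum_mono assms(3)) (auto simp: Lw_def)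
    then show "(\<Sum>k<n. g (xs!k)) \<le> n * G" by simp
  qed
  also have "\<dots> = (\<Sum>xs\<in>Lw R n. Qw p (sum p R) xs) * (n * G)" by (simp add: sum_distrib_right)
  also have "\<dots> \<le> n * G" using Q(1) assms(4) by (intro mult_left_le_one_le) (auto intro!: sum_nonneg Q(2))
  finally show ?thesis .
qed

lemma Qr_eq:
  fixes p g :: "'b \<Rightarrow> real"
  assumes "finite R" "sum p R > 0"
  shows "(\<Sum>xs\<in>Lr R n. (\<Prod>k<n. p (xs!k) / sum p R)) = 1 \<and>
    (\<Sum>xs\<in>Lr R n. (\<Prod>k<n. p (xs!k) / sum p R) * (\<Sum>k<n. g (xs!k))) = n * (\<Sum>x\<in>R. p x * g x) / sum p R"
proof (induction n)
  case 0
  then show ?case by (simp add: Lr_0)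
next
  case (Suc n)
  define T where "T = sum p R"
  define U where "U = (\<Sum>ys\<in>Lr R n. (\<Prod>k<n. p (ys!k) / T))"
  define V where "V = (\<Sum>ys\<in>Lr R n. (\<Prod>k<n. p (ys!k) / T) * (\<Sum>k<n. g (ys!k)))"
  have U: "U = 1" and V: "V = n * (\<Sum>x\<in>R. p x * g x) / T" using Suc unfolding U_def V_def T_def by auto
  have R1: "(\<Sum>x\<in>R. p x / T) = 1" using assms unfolding T_def by (simp add: sum_divide_distrib[symmetric])
  have 1: "(\<Sum>xs\<in>Lr R (Suc n). (\<Prod>k<Suc n. p (xs!k) / T)) = (\<Sum>x\<in>R. p x / T * U)"
    unfolding sum_Lr_Suc[OF assms(1)] U_def
    by (simp add: prod.lessThan_Suc_shift sum_distrib_left del: prod.lessThan_Suc)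
  have 2: "(\<Sum>xs\<in>Lr R (Suc n). (\<Prod>k<Suc n. p (xs!k) / T) * (\<Sum>k<Suc n. g (xs!k)))
     = (\<Sum>x\<in>R. p x / T * g x * U + p x / T * V)"
  proof -
    have "(\<Sum>xs\<in>Lr R (Suc n). (\<Prod>k<Suc n. p (xs!k) / T) * (\<Sum>k<Suc n. g (xs!k)))
      = (\<Sum>x\<in>R. \<Sum>ys\<in>Lr R n. p x / T * g x * (\<Prod>k<n. p (ys!k) / T) + p x / T * ((\<Prod>k<n. p (ys!k) / T) * (\<Sum>k<n. g (ys!k))))"
      unfolding sum_Lr_Suc[OF assms(1)]
      by (simp add: prod.lessThan_Suc_shift sum.lessThan_Suc_shift algebra_simps add_divide_distrib del: prod.lessThan_Suc sum.lessThan_Suc)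
    also have "\<dots> = (\<Sum>x\<in>R. p x / T * g x * U + p x / T * V)"
      unfolding U_def V_def by (simp only: sum.distrib sum_distrib_left)
    finally show ?thesis .
  qed
  have "(\<Sum>x\<in>R. p x / T * g x * U + p x / T * V) = (\<Sum>x\<in>R. p x * g x) / T + (\<Sum>x\<in>R. p x / T) * V"
    unfolding U sum.distrib sum_distrib_right[symmetric] by (simp add: sum_divide_distrib)
  also have "\<dots> = Suc n * (\<Sum>x\<in>R. p x * g x) / T" unfolding R1 V by (simp add: add_divide_distrib algebra_simps)
  finally show ?case using 1 2 R1 U unfolding T_def by (simp add: sum_distrib_right[symmetric])
qed


definition good_set :: "real set \<Rightarrow> bool" where
  "good_set X \<longleftrightarrow> X \<subseteq> {0<..} \<and> infinite X \<and> (\<forall>e>0. finite {x\<in>X. e \<le> x})"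

lemma good_fin_above: "good_set X \<Longrightarrow> x > 0 \<Longrightarrow> finite {y\<in>X. x < y}"
  unfolding good_set_def by (rule finite_subset[of _ "{y\<in>X. x \<le> y}"]) auto

lemma good_fin_above': "good_set X \<Longrightarrow> x \<in> X \<Longrightarrow> finite {y\<in>X. x < y}"
  using good_fin_above[of X x] unfolding good_set_def by auto

lemma good_rank_exists:
  assumes g: "good_set X"
  shows "\<exists>x\<in>X. card {y\<in>X. x < y} = k"
proof (induction k)
  case 0
  from g have "X \<noteq> {}" unfolding good_set_def by auto
  then obtain x0 where x0: "x0 \<in> X" by auto
  with g have "x0 > 0" unfolding good_set_def by auto
  let ?S = "{y\<in>X. x0 \<le> y}"
  have fin: "finite ?S" using g \<open>x0 > 0\<close> unfolding good_set_def by auto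
  have ne: "?S \<noteq> {}" using x0 by auto
  define M where "M = Max ?S"
  have M: "M \<in> ?S" using Max_in[OF fin ne] unfolding M_def .
  have "{y\<in>X. M < y} = {}"
  proof (rule ccontr)
    assume "{y\<in>X. M < y} \<noteq> {}"
    then obtain y where "y \<in> X" "M < y" by auto
    then have "y \<in> ?S" using M by auto
    then have "y \<le> M" unfolding M_def using fin by simp
    with \<open>M < y\<close> show False by simp
  qed
  then have "card {y\<in>X. M < y} = 0" by (simp only: card.empty)
  then show ?case using M by (intro bexI[of _ M]) auto
next
  case (Suc k)
  then obtain x where x: "x \<in> X" "card {y\<in>X. x < y} = k" by auto
  have xpos: "x > 0" using g x unfolding good_set_def by auto
  have fin_ge: "finite {y\<in>X. x \<le> y}" using g xpos unfolding good_set_def by auto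
  have "infinite {y\<in>X. y < x}"
  proof
    assume "finite {y\<in>X. y < x}"
    then have "finite ({y\<in>X. y < x} \<union> {y\<in>X. x \<le> y})" using fin_ge by simp
    moreover have "{y\<in>X. y < x} \<union> {y\<in>X. x \<le> y} = X" by auto
    ultimately show False using g unfolding good_set_def by simp
  qed
  then obtain y0 where y0: "y0 \<in> X" "y0 < x" by (metis (no_types, lifting) empty_Collect_eq finite.emptyI)
  have y0pos: "y0 > 0" using g y0 unfolding good_set_def by auto
  let ?S = "{y\<in>X. y0 \<le> y \<and> y < x}"
  have fin: "finite ?S"
    using g y0pos unfolding good_set_def by (auto intro: finite_subset[of _ "{y\<in>X. y0 \<le> y}"])
  have ne: "?S \<noteq> {}" using y0 by auto
  define z where "z = Max ?S"
  have z: "z \<in> ?S" using Max_in[OF fin ne] unfolding z_def .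
  have zx: "z < x" using z by simp
  have A: "y = x \<or> x < y" if y: "y \<in> X" "z < y" for y
  proof (rule ccontr)
    assume "\<not> (y = x \<or> x < y)"
    then have "y < x" by auto
    then have "y \<in> ?S" using y z by auto
    then have "y \<le> z" unfolding z_def using fin by simp
    with y show False by simp
  qed
  have eq: "{y\<in>X. z < y} = insert x {y\<in>X. x < y}"
    using A zx x(1) by auto
  have "card {y\<in>X. z < y} = Suc k"
    unfolding eq using good_fin_above'[OF g x(1)] x by (subst card_insert_disjoint) auto
  then show ?case using z by auto
qed

lemma good_rank_unique:
  assumes g: "good_set X" and "x \<in> X" "x' \<in> X" "card {y\<in>X. x < y} = card {y\<in>X. x' < y}"
  shows "x = x'"
proof (rule ccontr)
  assume ne: "x \<noteq> x'"
  have *: "card {y\<in>X. b < y} < card {y\<in>X. a < y}" if "a \<in> X" "b \<in> X" "a < b" for a b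
  proof (rule psubset_card_mono)
    show "finite {y\<in>X. a < y}" using good_fin_above'[OF g that(1)] .
    show "{y\<in>X. b < y} \<subset> {y\<in>X. a < y}" using that by auto
  qed
  show False
  proof (cases "x < x'")
    case True then show False using *[of x x'] assms by simp
  next
    case False then have "x' < x" using ne by simp
    then show False using *[of x' x] assms by simp
  qed
qed

lemma desc_atom_props:
  assumes g: "good_set X" and i: "i \<ge> 1"
  shows "desc_atom X i \<in> X" "card {y\<in>X. desc_atom X i < y} + 1 = i"
proof -
  obtain x where x: "x \<in> X" "card {y\<in>X. x < y} = i - 1" using good_rank_exists[OF g] by blast
  have P: "x \<in> X \<and> finite {y\<in>X. x < y} \<and> card {y\<in>X. x < y} + 1 = i"
    using x i good_fin_above'[OF g x(1)] by simp
  have "desc_atom X i = x"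
    unfolding desc_atom_def
  proof (rule the_equality)
    show "x \<in> X \<and> finite {y\<in>X. x < y} \<and> card {y\<in>X. x < y} + 1 = i" by (rule P)
    fix x' assume "x' \<in> X \<and> finite {y\<in>X. x' < y} \<and> card {y\<in>X. x' < y} + 1 = i"
    then show "x' = x" using good_rank_unique[OF g, of x' x] P by auto
  qed
  then show "desc_atom X i \<in> X" "card {y\<in>X. desc_atom X i < y} + 1 = i" using P by auto
qed

lemma desc_atom_pos: "good_set X \<Longrightarrow> i \<ge> 1 \<Longrightarrow> desc_atom X i > 0"
  using desc_atom_props(1)[of X i] unfolding good_set_def by auto

lemma desc_atom_less:
  assumes g: "good_set X" and "1 \<le> i" "i < j"
  shows "desc_atom X j < desc_atom X i"
proof (rule ccontr)
  assume "\<not> desc_atom X j < desc_atom X i"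
  then have le: "desc_atom X i \<le> desc_atom X j" by simp
  have "{y\<in>X. desc_atom X j < y} \<subseteq> {y\<in>X. desc_atom X i < y}" using le by auto
  then have "card {y\<in>X. desc_atom X j < y} \<le> card {y\<in>X. desc_atom X i < y}"
    using good_fin_above'[OF g desc_atom_props(1)[OF g assms(2)]] by (rule card_mono[rotated])
  then show False using desc_atom_props(2)[OF g, of i] desc_atom_props(2)[OF g, of j] assms by simp
qed

lemma desc_atom_mono:
  assumes g: "good_set X" and "1 \<le> i" "i \<le> j"
  shows "desc_atom X j \<le> desc_atom X i"
  using desc_atom_less[OF g, of i j] assms by (cases "i = j") auto

lemma desc_atom_inj: "good_set X \<Longrightarrow> inj_on (desc_atom X) {1..}"
  unfolding inj_on_def
  by (metis atLeast_iff desc_atom_less linorder_neqE_nat order_less_irrefl)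

lemma desc_atom_ge:
  assumes g: "good_set X" and i: "i \<ge> 1" and y: "y > 0" and c: "card {x\<in>X. y \<le> x} \<ge> i"
  shows "desc_atom X i \<ge> y"
proof (rule ccontr)
  assume "\<not> y \<le> desc_atom X i"
  then have "{x\<in>X. y \<le> x} \<subseteq> {x\<in>X. desc_atom X i < x}" by auto
  then have "card {x\<in>X. y \<le> x} \<le> card {x\<in>X. desc_atom X i < x}"
    using good_fin_above'[OF g desc_atom_props(1)[OF g i]] by (rule card_mono[rotated])
  then show False using c desc_atom_props(2)[OF g i] by simp
qed


lemma exp_partial_le:
  fixes x :: real assumes "x \<ge> 0"
  shows "(\<Sum>k\<le>n. x^k / fact k) \<le> exp x"
proof -
  have s: "(\<lambda>k. x^k / fact k) sums exp x" using exp_converges[of x] by (simp add: divide_inverse mult.commute)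
  show ?thesis
    using sum_le_suminf[OF sums_summable[OF s], of "{..n}"] sums_unique[OF s] assms by auto
qed

lemma pois_tail:
  fixes l \<theta> :: real
  assumes "l \<ge> 0" "0 < \<theta>" "\<theta> \<le> 1"
  shows "(\<Sum>k\<le>n. exp (-l) * l^k / fact k) \<le> exp (l * (\<theta> - 1)) / \<theta>^n"
proof -
  have "(\<Sum>k\<le>n. exp (-l) * l^k / fact k) \<le> (\<Sum>k\<le>n. exp (-l) / \<theta>^n * ((l*\<theta>)^k / fact k))"
  proof (rule sum_mono)
    fix k assume k: "k \<in> {..n}"
    have "\<theta>^n \<le> \<theta>^k" using assms k by (intro power_decreasing) auto
    then have "1 \<le> \<theta>^k / \<theta>^n" using assms by simp
    then have "exp (-l) * l^k / fact k * 1 \<le> exp (-l) * l^k / fact k * (\<theta>^k / \<theta>^n)"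
      using assms by (intro mult_left_mono) auto
    then show "exp (-l) * l^k / fact k \<le> exp (-l) / \<theta>^n * ((l*\<theta>)^k / fact k)"
      by (simp add: power_mult_distrib field_simps)
  qed
  also have "\<dots> = exp (-l) / \<theta>^n * (\<Sum>k\<le>n. (l*\<theta>)^k / fact k)" by (simp add: sum_distrib_left)
  also have "\<dots> \<le> exp (-l) / \<theta>^n * exp (l*\<theta>)"
    using assms by (intro mult_left_mono exp_partial_le) auto
  also have "\<dots> = exp (l * (\<theta> - 1)) / \<theta>^n" by (simp add: exp_add[symmetric] algebra_simps)
  finally show ?thesis .
qed

definition hfun :: "real \<Rightarrow> real" where "hfun \<rho> = 1/\<rho> - 1 + ln \<rho>"

lemma hfun_pos: "0 < \<rho> \<Longrightarrow> \<rho> < 1 \<Longrightarrow> hfun \<rho> > 0"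
proof -
  assume r: "0 < \<rho>" "\<rho> < 1"
  have "1/\<rho> > 1" using r by simp
  then have "ln (1 + (1/\<rho> - 1)) < 1/\<rho> - 1" by (intro ln_add_one_self_less_self) simp
  then have "ln (1/\<rho>) < 1/\<rho> - 1" by simp
  then show ?thesis using r by (simp add: hfun_def ln_div)
qed

lemma pois_tail2:
  fixes \<rho> :: real
  assumes "0 < \<rho>" "\<rho> < 1" "n > 0"
  shows "(\<Sum>k\<le>n. exp (-(n/\<rho>)) * (n/\<rho>)^k / fact k) \<le> 1 / (n * hfun \<rho>)"
proof -
  have "(\<Sum>k\<le>n. exp (-(n/\<rho>)) * (n/\<rho>)^k / fact k) \<le> exp ((n/\<rho>) * (\<rho> - 1)) / \<rho>^n"
    using assms by (intro pois_tail) auto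
  also have "\<rho>^n = exp (n * ln \<rho>)" using assms by (simp add: exp_of_nat_mult)
  also have "exp ((n/\<rho>) * (\<rho> - 1)) / exp (n * ln \<rho>) = exp (-(n * hfun \<rho>))"
    using assms by (simp add: exp_diff[symmetric] hfun_def field_simps)
  also have "\<dots> \<le> 1 / (n * hfun \<rho>)"
  proof -
    have pos: "n * hfun \<rho> > 0" using assms hfun_pos by simp
    have "n * hfun \<rho> < exp (n * hfun \<rho>)" using exp_ge_add_one_self[of "n * hfun \<rho>"] by linarith
    then show ?thesis using pos by (simp add: exp_minus field_simps)
  qed
  finally show ?thesis .
qed

lemma pois_mean:
  fixes l :: real assumes "l \<ge> 0"
  shows "(\<Sum>k. ennreal (real k * (exp (-l) * l^k / fact k))) = ennreal l"
proof (rule suminf_ennreal_eq)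
  show "0 \<le> real k * (exp (-l) * l^k / fact k)" for k using assms by simp
  have s: "(\<lambda>k. l^k / fact k) sums exp l" using exp_converges[of l] by (simp add: divide_inverse mult.commute)
  have e: "l * exp (-l) * exp l = l" by (simp add: exp_minus field_simps)
  have fe: "(\<lambda>j. l * exp (-l) * (l^j / fact j)) = (\<lambda>j. real (Suc j) * (exp (-l) * l^(Suc j) / fact (Suc j)))"
  proof
    fix j
    have f: "(fact (Suc j)::real) = real (Suc j) * fact j" by (simp only: fact_Suc of_nat_mult)
    have p: "real (Suc j) > 0" "(fact j::real) > 0" by auto
    show "l * exp (-l) * (l^j / fact j) = real (Suc j) * (exp (-l) * l^(Suc j) / fact (Suc j))"
      unfolding f using p by (simp only: power_Suc) (simp add: field_simps del: of_nat_Suc)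
  qed
  have "(\<lambda>j. l * exp (-l) * (l^j / fact j)) sums (l * exp (-l) * exp l)"
    by (rule sums_mult[OF s])
  then have "(\<lambda>j. real (Suc j) * (exp (-l) * l^(Suc j) / fact (Suc j))) sums l" unfolding e fe .
  then show "(\<lambda>k. real k * (exp (-l) * l^k / fact k)) sums l"
    by (subst (asm) sums_Suc_iff) simp
qed


lemma isi_sets[simp]: "sets inv_sq_intensity = sets borel"
  unfolding inv_sq_intensity_def by simp

lemma isi_meas[measurable]: "(\<lambda>x::real. ennreal (indicator {0<..} x / x\<^sup>2)) \<in> borel_measurable borel"
  by measurable

lemma isi_atLeast:
  assumes y: "y > 0"
  shows "emeasure inv_sq_intensity {y..} = ennreal (1/y)"
proof -
  have "emeasure inv_sq_intensity {y..} = (\<integral>\<^sup>+ x. ennreal (indicator {0<..} x / x\<^sup>2) * indicator {y..} x \<partial>lborel)"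
    unfolding inv_sq_intensity_def by (subst emeasure_density) auto
  also have "\<dots> = (\<integral>\<^sup>+ x. ennreal (1 / x\<^sup>2) * indicator {y..} x \<partial>lborel)"
    using y by (intro nn_integral_cong) (auto split: split_indicator)
  also have "\<dots> = ennreal (0 - (- 1 / y))"
  proof (rule nn_integral_FTC_atLeast)
    show "(\<lambda>x::real. 1 / x\<^sup>2) \<in> borel_measurable borel" by measurable
    show "DERIV (\<lambda>x. - 1 / x) x :> 1 / x\<^sup>2" if "y \<le> x" for x
      using that y by (auto intro!: derivative_eq_intros simp: power2_eq_square field_simps)
    show "0 \<le> 1 / x\<^sup>2" for x :: real by simp
    show "((\<lambda>x::real. - 1 / x) \<longlongrightarrow> 0) at_top"
      by (intro tendsto_divide_0[OF tendsto_const] filterlim_at_top_imp_at_infinity filterlim_ident)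
  qed
  finally show ?thesis by simp
qed

lemma isi_atLeastLessThan:
  assumes "0 < a" "a \<le> b"
  shows "emeasure inv_sq_intensity {a..<b} = ennreal (1/a - 1/b)"
proof -
  have "{a..<b} = {a..} - {b..}" by auto
  then have "emeasure inv_sq_intensity {a..<b} = emeasure inv_sq_intensity {a..} - emeasure inv_sq_intensity {b..}"
    using assms by (simp add: emeasure_Diff isi_atLeast)
  also have "\<dots> = ennreal (1/a - 1/b)"
    using assms by (simp add: isi_atLeast ennreal_minus frac_le)
  finally show ?thesis .
qed


locale ppp = prob_space P for P :: "'a measure" +
  fixes Xi :: "'a \<Rightarrow> real set"
  assumes PPP: "poisson_point_process P Xi inv_sq_intensity"
begin

lemma cnt:
  assumes "B \<in> sets borel" "B \<subseteq> {0<..}" "emeasure inv_sq_intensity B < \<infinity>"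
  shows "AE \<omega> in P. finite (Xi \<omega> \<inter> B)"
    "(\<lambda>\<omega>. card (Xi \<omega> \<inter> B)) \<in> measurable P (count_space UNIV)"
    "prob {\<omega>\<in>space P. card (Xi \<omega> \<inter> B) = k} =
       exp (- measure inv_sq_intensity B) * measure inv_sq_intensity B ^ k / fact k"
  using PPP assms unfolding poisson_point_process_def by blast+

lemma Xi_pos: "\<omega> \<in> space P \<Longrightarrow> Xi \<omega> \<subseteq> {0<..}"
  using PPP unfolding poisson_point_process_def by blast

lemma cnt_sets:
  assumes "B \<in> sets borel" "B \<subseteq> {0<..}" "emeasure inv_sq_intensity B < \<infinity>"
  shows "{\<omega>\<in>space P. card (Xi \<omega> \<inter> B) = k} \<in> sets P"
    "{\<omega>\<in>space P. card (Xi \<omega> \<inter> B) \<le> k} \<in> sets P"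
    "{\<omega>\<in>space P. k \<le> card (Xi \<omega> \<inter> B)} \<in> sets P"
proof -
  have m: "(\<lambda>\<omega>. card (Xi \<omega> \<inter> B)) \<in> measurable P (count_space UNIV)" by (rule cnt(2)[OF assms])
  show "{\<omega>\<in>space P. card (Xi \<omega> \<inter> B) = k} \<in> sets P"
    using measurable_sets[OF m, of "{k}"] by (simp add: vimage_def Int_def conj_commute)
  show "{\<omega>\<in>space P. card (Xi \<omega> \<inter> B) \<le> k} \<in> sets P"
    using measurable_sets[OF m, of "{..k}"] by (simp add: vimage_def Int_def conj_commute)
  show "{\<omega>\<in>space P. k \<le> card (Xi \<omega> \<inter> B)} \<in> sets P"
    using measurable_sets[OF m, of "{k..}"] by (simp add: vimage_def Int_def conj_commute)
qed

lemma cnt_le_prob: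
  assumes B: "B \<in> sets borel" "B \<subseteq> {0<..}" "emeasure inv_sq_intensity B < \<infinity>"
  shows "prob {\<omega>\<in>space P. card (Xi \<omega> \<inter> B) \<le> n} =
    (\<Sum>k\<le>n. exp (- measure inv_sq_intensity B) * measure inv_sq_intensity B ^ k / fact k)"
proof -
  have "{\<omega>\<in>space P. card (Xi \<omega> \<inter> B) \<le> n} = (\<Union>k\<in>{..n}. {\<omega>\<in>space P. card (Xi \<omega> \<inter> B) = k})" by auto
  also have "prob \<dots> = (\<Sum>k\<le>n. prob {\<omega>\<in>space P. card (Xi \<omega> \<inter> B) = k})"
    by (rule measure_finite_Union) (auto simp: disjoint_family_on_def cnt_sets[OF B])
  also have "\<dots> = (\<Sum>k\<le>n. exp (- measure inv_sq_intensity B) * measure inv_sq_intensity B ^ k / fact k)"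
    using cnt(3)[OF B] by simp
  finally show ?thesis .
qed

lemma isi_atLeast_fin: "y > 0 \<Longrightarrow> emeasure inv_sq_intensity {y..} < \<infinity>"
  by (simp add: isi_atLeast)

lemma isi_atLeast_measure: "y > 0 \<Longrightarrow> measure inv_sq_intensity {y..} = 1/y"
  by (simp add: measure_def isi_atLeast)

lemma cnt_tail:
  assumes "0 < \<rho>" "\<rho> < 1" "n > 0"
  shows "prob {\<omega>\<in>space P. card (Xi \<omega> \<inter> {\<rho>/n..}) \<le> n} \<le> 1 / (n * hfun \<rho>)"
proof -
  have y: "\<rho>/n > 0" using assms by simp
  have B: "{\<rho>/n..} \<in> sets borel" "{\<rho>/n..} \<subseteq> {0<..}" "emeasure inv_sq_intensity {\<rho>/n..} < \<infinity>"
    using y isi_atLeast_fin[OF y] by auto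
  have l: "measure inv_sq_intensity {\<rho>/n..} = n/\<rho>" using isi_atLeast_measure[OF y] by simp
  show ?thesis unfolding cnt_le_prob[OF B] l using pois_tail2[OF assms] by simp
qed

lemma cnt_mean:
  assumes B: "B \<in> sets borel" "B \<subseteq> {0<..}" "emeasure inv_sq_intensity B < \<infinity>"
  shows "(\<integral>\<^sup>+\<omega>. ennreal (real (card (Xi \<omega> \<inter> B))) \<partial>P) = emeasure inv_sq_intensity B"
proof -
  define A where "A k = {\<omega>\<in>space P. card (Xi \<omega> \<inter> B) = k}" for k
  define l where "l = measure inv_sq_intensity B"
  have Am: "A k \<in> sets P" for k unfolding A_def by (rule cnt_sets[OF B])
  have dA: "disjoint_family A" unfolding A_def disjoint_family_on_def by auto
  have "(\<integral>\<^sup>+\<omega>. ennreal (real (card (Xi \<omega> \<inter> B))) \<partial>P) = (\<integral>\<^sup>+\<omega>. (\<Sum>k. ennreal (real k) * indicator (A k) \<omega>) \<partial>P)"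
  proof (rule nn_integral_cong)
    fix \<omega> assume "\<omega> \<in> space P"
    then have "\<omega> \<in> A (card (Xi \<omega> \<inter> B))" unfolding A_def by simp
    then show "ennreal (real (card (Xi \<omega> \<inter> B))) = (\<Sum>k. ennreal (real k) * indicator (A k) \<omega>)"
      using suminf_cmult_indicator[OF dA] by simp
  qed
  also have "\<dots> = (\<Sum>k. \<integral>\<^sup>+\<omega>. ennreal (real k) * indicator (A k) \<omega> \<partial>P)"
    by (rule nn_integral_suminf) (use Am in auto)
  also have "\<dots> = (\<Sum>k. ennreal (real k) * ennreal (exp (-l) * l^k / fact k))"
    using Am cnt(3)[OF B] by (simp add: nn_integral_cmult_indicator emeasure_eq_measure A_def l_def)
  also have "\<dots> = (\<Sum>k. ennreal (real k * (exp (-l) * l^k / fact k)))"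
  proof (rule suminf_cong)
    fix k have "l \<ge> 0" unfolding l_def by simp
    then show "ennreal (real k) * ennreal (exp (-l) * l^k / fact k) = ennreal (real k * (exp (-l) * l^k / fact k))"
      by (subst ennreal_mult) auto
  qed
  also have "\<dots> = ennreal l" by (rule pois_mean) (simp add: l_def)
  also have "\<dots> = emeasure inv_sq_intensity B" using B(3) unfolding l_def
    by (simp add: emeasure_eq_ennreal_measure less_top[symmetric])
  finally show ?thesis .
qed

lemma AE_good: "AE \<omega> in P. good_set (Xi \<omega>)"
proof -
  define B where "B m = {(1/2) / real (Suc m)..}" for m :: nat
  have Bpos: "(1/2) / real (Suc m) > 0" for m by simp
  have Bp: "B m \<in> sets borel" "B m \<subseteq> {0<..}" "emeasure inv_sq_intensity (B m) < \<infinity>" for m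
  proof -
    show "B m \<in> sets borel" unfolding B_def by simp
    show "B m \<subseteq> {0<..}" using Bpos[of m] unfolding B_def subset_iff atLeast_iff greaterThan_iff
      by (meson less_le_trans)
    show "emeasure inv_sq_intensity (B m) < \<infinity>" unfolding B_def by (rule isi_atLeast_fin[OF Bpos])
  qed
  have h: "hfun (1/2) > 0" by (rule hfun_pos) auto
  have fin: "AE \<omega> in P. \<forall>m. finite (Xi \<omega> \<inter> B m)"
    by (subst AE_all_countable) (auto intro: cnt(1)[OF Bp])
  have inf: "AE \<omega> in P. \<not> (finite (Xi \<omega>) \<and> card (Xi \<omega>) \<le> j)" for j
  proof -
    define N where "N = (\<Inter>m. {\<omega>\<in>space P. card (Xi \<omega> \<inter> B m) \<le> j})"
    have Nm: "N \<in> sets P" unfolding N_def using cnt_sets(2)[OF Bp] by auto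
    have bound: "prob N \<le> 1 / (real (Suc m) * hfun (1/2))" if "j \<le> Suc m" for m
    proof -
      have "N \<subseteq> {\<omega>\<in>space P. card (Xi \<omega> \<inter> {(1/2) / real (Suc m)..}) \<le> Suc m}"
        unfolding N_def B_def using that by (auto intro: le_trans)
      then have "prob N \<le> prob {\<omega>\<in>space P. card (Xi \<omega> \<inter> {(1/2) / real (Suc m)..}) \<le> Suc m}"
        using cnt_sets(2)[OF Bp[of m], of "Suc m"] unfolding B_def by (intro finite_measure_mono) auto
      also have "\<dots> \<le> 1 / (real (Suc m) * hfun (1/2))" by (rule cnt_tail) auto
      finally show ?thesis .
    qed
    have "prob N = 0"
    proof (rule ccontr)
      assume "prob N \<noteq> 0"
      then have p: "prob N > 0" using measure_nonneg[of P N] by linarith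
      obtain m :: nat where m: "m > 1 / (prob N * hfun (1/2))" "m \<ge> j"
        using reals_Archimedean2[of "1 / (prob N * hfun (1/2))"]
        by (metis le_cases less_le_trans of_nat_le_iff)
      have "prob N \<le> 1 / (real (Suc m) * hfun (1/2))" using bound m by simp
      moreover have "1 / (real (Suc m) * hfun (1/2)) < prob N"
      proof -
        have "1 / (prob N * hfun (1/2)) < real (Suc m)" using m by simp
        then have "1 < real (Suc m) * (prob N * hfun (1/2))" using p h by (simp add: field_simps)
        then have "1 < prob N * (real (Suc m) * hfun (1/2))" by (simp add: algebra_simps)
        moreover have "real (Suc m) * hfun (1/2) > 0" using h by simp
        ultimately show ?thesis by (simp add: divide_less_eq)
      qed
      ultimately show False by simp
    qed
    then have "N \<in> null_sets P" using Nm by (simp add: null_sets_def emeasure_eq_measure)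
    moreover have "{\<omega>\<in>space P. \<not> \<not> (finite (Xi \<omega>) \<and> card (Xi \<omega>) \<le> j)} \<subseteq> N"
    proof (rule subsetI)
      fix \<omega> assume "\<omega> \<in> {\<omega>\<in>space P. \<not> \<not> (finite (Xi \<omega>) \<and> card (Xi \<omega>) \<le> j)}"
      then have w: "\<omega> \<in> space P" "finite (Xi \<omega>)" "card (Xi \<omega>) \<le> j" by auto
      have "card (Xi \<omega> \<inter> B m) \<le> j" for m using card_mono[OF w(2), of "Xi \<omega> \<inter> B m"] w by auto
      then show "\<omega> \<in> N" unfolding N_def using w by auto
    qed
    ultimately show ?thesis by (rule AE_I')
  qed
  have inf': "AE \<omega> in P. \<forall>j. \<not> (finite (Xi \<omega>) \<and> card (Xi \<omega>) \<le> j)"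
    by (subst AE_all_countable) (rule allI, rule inf)
  show ?thesis
    using fin inf' AE_space
  proof eventually_elim
    case (elim \<omega>)
    have "infinite (Xi \<omega>)" using elim(2)[rule_format, of "card (Xi \<omega>)"] by auto
    moreover have "finite {x\<in>Xi \<omega>. e \<le> x}" if e: "e > 0" for e
    proof -
      obtain m :: nat where m: "m > 1 / e" using reals_Archimedean2 by blast
      have "(1/2) / real (Suc m) \<le> e"
      proof -
        have "1 / e < real (Suc m)" using m by simp
        then have "1 < e * real (Suc m)" using e by (simp add: field_simps)
        then show ?thesis by (simp add: field_simps)
      qed
      then have "{x\<in>Xi \<omega>. e \<le> x} \<subseteq> Xi \<omega> \<inter> B m" unfolding B_def by auto
      then show ?thesis using elim(1) finite_subset by blast
    qed
    ultimately show ?case using Xi_pos[OF elim(3)] unfolding good_set_def by auto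
  qed
qed

end

lemma wor_lists_Lw: "wor_lists m N = Lw {1..m} N" unfolding wor_lists_def Lw_def by auto
lemma wr_lists_Lr: "wr_lists m N = Lr {1..m} N" unfolding wr_lists_def Lr_def by auto
lemma wor_prob_Qw: "wor_prob w \<beta> m xs = Qw (\<lambda>j. w j powr \<beta>) (sum (\<lambda>j. w j powr \<beta>) {1..m}) xs"
  unfolding wor_prob_def Qw_def by simp

definition gfun :: "real \<Rightarrow> real \<Rightarrow> real \<Rightarrow> real" where
  "gfun a c x = x powr a * indicator {..c} x"

lemma F_wor_bound:
  fixes w :: "nat \<Rightarrow> real"
  assumes wpos: "\<And>j. j \<in> {1..m} \<Longrightarrow> w j > 0" and c: "c > 0" and a: "a > 0" and L: "L > 0"
    and D: "\<And>D. D \<subseteq> {1..m} \<Longrightarrow> card D < N \<Longrightarrow> L \<le> sum (\<lambda>j. w j powr \<beta>) ({1..m} - D)"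
  shows "(\<Sum>xs\<in>wor_lists m N. wor_prob w \<beta> m xs * (\<Sum>k<N. w (xs!k) powr a * indicator {..c} (w (xs!k))))
      \<le> N * (\<Sum>j=1..m. w j powr (a+\<beta>) * indicator {..c} (w j)) / L"
    "(\<Sum>xs\<in>wor_lists m N. wor_prob w \<beta> m xs * (\<Sum>k<N. w (xs!k) powr a * indicator {..c} (w (xs!k))))
      \<le> N * c powr a"
proof -
  let ?p = "\<lambda>j. w j powr \<beta>" and ?g = "\<lambda>j. w j powr a * indicator {..c} (w j)"
  have eq: "(\<Sum>xs\<in>wor_lists m N. wor_prob w \<beta> m xs * (\<Sum>k<N. w (xs!k) powr a * indicator {..c} (w (xs!k))))
     = (\<Sum>xs\<in>Lw {1..m} N. Qw ?p (sum ?p {1..m}) xs * (\<Sum>k<N. ?g (xs!k)))"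
    unfolding wor_lists_Lw wor_prob_Qw ..
  have "(\<Sum>xs\<in>Lw {1..m} N. Qw ?p (sum ?p {1..m}) xs * (\<Sum>k<N. ?g (xs!k))) \<le> N * (\<Sum>j\<in>{1..m}. ?p j * ?g j) / L"
    by (rule Qw_bound) (use D L in \<open>auto simp: indicator_def\<close>)
  also have "(\<Sum>j\<in>{1..m}. ?p j * ?g j) = (\<Sum>j=1..m. w j powr (a+\<beta>) * indicator {..c} (w j))"
    using wpos by (intro sum.cong) (auto simp: powr_add)
  finally show "(\<Sum>xs\<in>wor_lists m N. wor_prob w \<beta> m xs * (\<Sum>k<N. w (xs!k) powr a * indicator {..c} (w (xs!k))))
      \<le> N * (\<Sum>j=1..m. w j powr (a+\<beta>) * indicator {..c} (w j)) / L" unfolding eq .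
  have "(\<Sum>xs\<in>Lw {1..m} N. Qw ?p (sum ?p {1..m}) xs * (\<Sum>k<N. ?g (xs!k))) \<le> N * c powr a"
  proof (rule Qw_bound2)
    fix x assume "x \<in> {1..m}"
    then have "w x > 0" by (rule wpos)
    then show "?g x \<le> c powr a" using a by (auto simp: indicator_def intro: powr_mono2)
  qed auto
  then show "(\<Sum>xs\<in>wor_lists m N. wor_prob w \<beta> m xs * (\<Sum>k<N. w (xs!k) powr a * indicator {..c} (w (xs!k))))
      \<le> N * c powr a" unfolding eq .
qed

lemma F_wr_bound:
  fixes w :: "nat \<Rightarrow> real"
  assumes wpos: "\<And>j. j \<in> {1..m} \<Longrightarrow> w j > 0" and c: "c > 0" and a: "a > 0" and L: "L > 0"
    and LS: "L \<le> sum (\<lambda>j. w j powr \<beta>) {1..m}"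
  shows "(\<Sum>xs\<in>wr_lists m N. wr_prob w \<beta> m xs * (\<Sum>k<N. w (xs!k) powr a * indicator {..c} (w (xs!k))))
      \<le> N * (\<Sum>j=1..m. w j powr (a+\<beta>) * indicator {..c} (w j)) / L"
    "(\<Sum>xs\<in>wr_lists m N. wr_prob w \<beta> m xs * (\<Sum>k<N. w (xs!k) powr a * indicator {..c} (w (xs!k))))
      \<le> N * c powr a"
proof -
  let ?p = "\<lambda>j. w j powr \<beta>" and ?g = "\<lambda>j. w j powr a * indicator {..c} (w j)"
  let ?S = "sum ?p {1..m}"
  have Spos: "?S > 0" using L LS by simp
  have eq: "(\<Sum>xs\<in>wr_lists m N. wr_prob w \<beta> m xs * (\<Sum>k<N. w (xs!k) powr a * indicator {..c} (w (xs!k))))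
     = (\<Sum>xs\<in>Lr {1..m} N. (\<Prod>k<N. ?p (xs!k) / ?S) * (\<Sum>k<N. ?g (xs!k)))"
    unfolding wr_lists_Lr by (intro sum.cong) (auto simp: wr_prob_def Lr_def)
  have Q: "(\<Sum>xs\<in>Lr {1..m} N. (\<Prod>k<N. ?p (xs!k) / ?S) * (\<Sum>k<N. ?g (xs!k))) = N * (\<Sum>j\<in>{1..m}. ?p j * ?g j) / ?S"
    using Qr_eq[of "{1..m}" ?p N ?g] Spos by auto
  have PG: "(\<Sum>j\<in>{1..m}. ?p j * ?g j) \<ge> 0" by (intro sum_nonneg) (auto simp: indicator_def)
  have E1: "N * (\<Sum>j\<in>{1..m}. ?p j * ?g j) / ?S \<le> N * (\<Sum>j\<in>{1..m}. ?p j * ?g j) / L"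
    using PG L LS by (intro divide_left_mono) auto
  have E2: "(\<Sum>j\<in>{1..m}. ?p j * ?g j) = (\<Sum>j=1..m. w j powr (a+\<beta>) * indicator {..c} (w j))"
    using wpos by (intro sum.cong) (auto simp: powr_add)
  show "(\<Sum>xs\<in>wr_lists m N. wr_prob w \<beta> m xs * (\<Sum>k<N. w (xs!k) powr a * indicator {..c} (w (xs!k))))
      \<le> N * (\<Sum>j=1..m. w j powr (a+\<beta>) * indicator {..c} (w j)) / L" unfolding eq Q using E1 unfolding E2 .
  have "(\<Sum>j\<in>{1..m}. ?p j * ?g j) \<le> (\<Sum>j\<in>{1..m}. ?p j * c powr a)"
  proof (intro sum_mono mult_left_mono)
    fix j assume "j \<in> {1..m}"
    then have "w j > 0" by (rule wpos)
    then show "?g j \<le> c powr a" using a by (auto simp: indicator_def intro: powr_mono2)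
  qed simp
  also have "\<dots> = ?S * c powr a" by (simp add: sum_distrib_right)
  finally have "N * (\<Sum>j\<in>{1..m}. ?p j * ?g j) / ?S \<le> N * (?S * c powr a) / ?S"
    using Spos by (intro divide_right_mono mult_left_mono) auto
  also have "\<dots> = N * c powr a" using Spos by simp
  finally show "(\<Sum>xs\<in>wr_lists m N. wr_prob w \<beta> m xs * (\<Sum>k<N. w (xs!k) powr a * indicator {..c} (w (xs!k))))
      \<le> N * c powr a" unfolding eq Q .
qed

lemma pairing:
  fixes p :: "nat \<Rightarrow> real"
  assumes anti: "\<And>i j. 1 \<le> i \<Longrightarrow> i \<le> j \<Longrightarrow> j \<le> m \<Longrightarrow> p j \<le> p i"
    and nn: "\<And>j. j \<in> {1..m} \<Longrightarrow> p j \<ge> 0"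
    and D: "D \<subseteq> {1..m}" "card D < N"
  shows "sum p {N..m} \<le> sum p ({1..m} - D)"
proof (cases "N \<le> m")
  case False
  then have "{N..m} = {}" by auto
  then show ?thesis using nn by (auto intro!: sum_nonneg)
next
  case True
  have N1: "N \<ge> 1" using D by simp
  define U where "U = {N..m}"
  define V where "V = {1..<N}"
  have fD: "finite D" using D finite_subset by blast
  have UV: "{1..m} = V \<union> U" "V \<inter> U = {}" unfolding U_def V_def using N1 True by auto
  have s1: "sum p ({1..m} - D) = sum p (V - D) + sum p (U - D)"
    unfolding UV(1) Un_Diff using UV(2) by (intro sum.union_disjoint) (auto simp: U_def V_def)
  have s2: "sum p U = sum p (U - D) + sum p (U \<inter> D)"
  proof -
    have "sum p U = sum p ((U-D) \<union> (U\<inter>D))" by (simp add: Un_Diff_Int)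
    also have "\<dots> = sum p (U-D) + sum p (U\<inter>D)" by (intro sum.union_disjoint) (auto simp: U_def)
    finally show ?thesis .
  qed
  have pN: "p N \<ge> 0" using nn N1 True by auto
  have b1: "sum p (U \<inter> D) \<le> real (card (U \<inter> D)) * p N"
    using sum_bounded_above[of "U \<inter> D" p "p N"] anti N1 unfolding U_def by auto
  have b2: "real (card (V - D)) * p N \<le> sum p (V - D)"
    using sum_bounded_below[of "V - D" "p N" p] anti True unfolding V_def by auto
  have cD: "card D = card (V \<inter> D) + card (U \<inter> D)"
  proof -
    have "D = (V \<inter> D) \<union> (U \<inter> D)" using D UV by auto
    then have "card D = card ((V \<inter> D) \<union> (U \<inter> D))" by simp
    also have "\<dots> = card (V \<inter> D) + card (U \<inter> D)"
      using UV(2) fD by (intro card_Un_disjoint) auto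
    finally show ?thesis .
  qed
  have cV: "card (V - D) = card V - card (V \<inter> D)"
    by (rule card_Diff_subset_Int) (simp add: V_def)
  have "card V = N - 1" unfolding V_def by simp
  then have "card (U \<inter> D) \<le> card (V - D)" using cV cD D by linarith
  then have "real (card (U \<inter> D)) * p N \<le> real (card (V - D)) * p N" using pN by (intro mult_right_mono) auto
  then show ?thesis using s1 s2 b1 b2 unfolding U_def by linarith
qed

lemma chain_mono:
  fixes n :: "nat \<Rightarrow> nat"
  assumes "\<And>s. 2 \<le> s \<Longrightarrow> s \<le> K \<Longrightarrow> n (s-1) \<le> n s"
  shows "1 \<le> r \<Longrightarrow> r \<le> K \<Longrightarrow> n 1 \<le> n r"
proof (induction r)
  case 0 then show ?case by simp
next
  case (Suc r)
  show ?case
  proof (cases "r = 0")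
    case True then show ?thesis by simp
  next
    case False
    then have "n 1 \<le> n r" using Suc by simp
    also have "n r \<le> n (Suc r)" using assms[of "Suc r"] Suc.prems False by simp
    finally show ?thesis .
  qed
qed

lemma block_sum:
  fixes n :: "nat \<Rightarrow> nat" and p y :: "nat \<Rightarrow> real"
  assumes mono: "\<And>s. 2 \<le> s \<Longrightarrow> s \<le> K \<Longrightarrow> n (s-1) \<le> n s"
    and low: "\<And>s j. 2 \<le> s \<Longrightarrow> s \<le> K \<Longrightarrow> n (s-1) < j \<Longrightarrow> j \<le> n s \<Longrightarrow> y s \<le> p j"
  shows "1 \<le> r \<Longrightarrow> r \<le> K \<Longrightarrow> (\<Sum>s=2..r. real (n s - n (s-1)) * y s) \<le> sum p {n 1<..n r}"
proof (induction r)
  case 0 then show ?case by simp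
next
  case (Suc r)
  show ?case
  proof (cases "r = 0")
    case True then show ?thesis by simp
  next
    case False
    have r1: "1 \<le> r" "r \<le> K" using False Suc.prems by auto
    have IH: "(\<Sum>s=2..r. real (n s - n (s-1)) * y s) \<le> sum p {n 1<..n r}" using Suc.IH r1 by simp
    have m1: "n 1 \<le> n r" using chain_mono[of K n, OF mono r1] .
    have m2: "n r \<le> n (Suc r)" using mono[of "Suc r"] Suc.prems False by simp
    have split: "{n 1<..n (Suc r)} = {n 1<..n r} \<union> {n r<..n (Suc r)}" using m1 m2 by auto
    have s: "sum p {n 1<..n (Suc r)} = sum p {n 1<..n r} + sum p {n r<..n (Suc r)}"
      unfolding split by (intro sum.union_disjoint) auto
    have b: "real (n (Suc r) - n r) * y (Suc r) \<le> sum p {n r<..n (Suc r)}"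
      using sum_bounded_below[of "{n r<..n (Suc r)}" "y (Suc r)" p] low[of "Suc r"] Suc.prems False by auto
    have "{2..Suc r} = insert (Suc r) {2..r}" using False by auto
    then have "(\<Sum>s=2..Suc r. real (n s - n (s-1)) * y s) = real (n (Suc r) - n r) * y (Suc r) + (\<Sum>s=2..r. real (n s - n (s-1)) * y s)"
      by simp
    then show ?thesis using IH s b by linarith
  qed
qed

lemma grid_cover:
  fixes q c x :: real
  assumes q: "0 < q" "q < 1" and c: "c > 0" and x: "0 < x" "x \<le> c"
  shows "\<exists>k. c * q^k \<le> x \<and> x < c * q^k / q"
proof -
  obtain n where n: "q^n < x / c" using real_arch_pow_inv[of "x/c" q] q x c by auto
  then have ex: "\<exists>k. c * q^k \<le> x" using c by (intro exI[of _ n]) (simp add: field_simps)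
  define k where "k = (LEAST k. c * q^k \<le> x)"
  have k: "c * q^k \<le> x" unfolding k_def by (rule LeastI_ex[OF ex])
  have "x < c * q^k / q"
  proof (cases k)
    case 0
    have "q * x < 1 * x" using x q by (intro mult_strict_right_mono) auto
    then have "q * x < c" using x by linarith
    then show ?thesis using 0 q by (simp add: field_simps)
  next
    case (Suc k')
    then have "\<not> c * q^k' \<le> x" using not_less_Least[of k' "\<lambda>k. c * q^k \<le> x"] unfolding k_def by auto
    then show ?thesis using Suc q by simp
  qed
  then show ?thesis using k by blast
qed

lemma H_bound:
  fixes X :: "real set" and q c e :: real
  assumes g: "good_set X" and q: "0 < q" "q < 1" and c: "c > 0" and e: "e > 0"
  shows "ennreal (\<Sum>j=1..m. desc_atom X j powr e * indicator {..c} (desc_atom X j))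
    \<le> (\<Sum>k. ennreal ((c * q^k / q) powr e) * ennreal (real (card (X \<inter> {c * q^k ..< c * q^k / q}))))"
proof -
  define w where "w = desc_atom X"
  define I where "I k = {c * q^k ..< c * q^k / q}" for k
  define v where "v k = (c * q^k / q) powr e" for k
  define f where "f x = x powr e * indicator {..c} x" for x :: real
  define W where "W = w ` {1..m}"
  have inj: "inj_on w {1..m}" using desc_atom_inj[OF g] unfolding w_def by (rule inj_on_subset) auto
  have WX: "W \<subseteq> X" unfolding W_def w_def using desc_atom_props(1)[OF g] by auto
  have fW: "finite W" unfolding W_def by simp
  have Xpos: "\<And>x. x \<in> X \<Longrightarrow> x > 0" using g unfolding good_set_def by auto
  have fnn: "f x \<ge> 0" for x unfolding f_def by (simp add: indicator_def)
  have pt: "ennreal (f x) \<le> (\<Sum>k. ennreal (v k) * indicator (I k) x)" if x: "x > 0" for x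
  proof (cases "x \<le> c")
    case False then show ?thesis by (simp add: f_def)
  next
    case True
    then obtain k where k: "c * q^k \<le> x" "x < c * q^k / q" using grid_cover[OF q c x] by blast
    have "f x = x powr e" using True by (simp add: f_def)
    also have "\<dots> \<le> v k" unfolding v_def using k x e by (intro powr_mono2) auto
    finally have "ennreal (f x) \<le> ennreal (v k) * indicator (I k) x" using k by (simp add: I_def ennreal_leI)
    also have "\<dots> \<le> (\<Sum>k. ennreal (v k) * indicator (I k) x)"
    proof -
      have "sum (\<lambda>k'. ennreal (v k') * indicator (I k') x) {k} \<le> (\<Sum>k'. ennreal (v k') * indicator (I k') x)"
        by (rule sum_le_suminf) (auto simp: summableI)
      then show ?thesis by (simp only: sum.insert[OF finite.emptyI empty_iff[THEN iffD1, THEN notI]] sum.empty add_0_right)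
    qed
    finally show ?thesis .
  qed
  have "ennreal (\<Sum>j=1..m. desc_atom X j powr e * indicator {..c} (desc_atom X j)) = (\<Sum>j\<in>{1..m}. ennreal (f (w j)))"
    by (subst sum_ennreal) (auto simp: fnn f_def w_def)
  also have "\<dots> = (\<Sum>x\<in>W. ennreal (f x))" unfolding W_def by (subst sum.reindex[OF inj]) auto
  also have "\<dots> \<le> (\<Sum>x\<in>W. \<Sum>k. ennreal (v k) * indicator (I k) x)"
    using WX Xpos by (intro sum_mono pt) auto
  also have "\<dots> = (\<Sum>k. \<Sum>x\<in>W. ennreal (v k) * indicator (I k) x)"
    by (rule suminf_sum[symmetric]) (simp add: summableI)
  also have "\<dots> = (\<Sum>k. ennreal (v k) * of_nat (card (W \<inter> I k)))"
  proof -
    have ic: "sum (indicator (I k)) W = (of_nat (card (W \<inter> I k)) :: ennreal)" for k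
      unfolding indicator_def using fW by (simp add: sum.If_cases Int_commute)
    show ?thesis by (simp add: sum_distrib_left[symmetric] ic)
  qed
  also have "\<dots> \<le> (\<Sum>k. ennreal (v k) * of_nat (card (X \<inter> I k)))"
  proof (rule suminf_le)
    fix k
    have pk: "c * q^k / 2 > 0" using c q by simp
    have "finite (X \<inter> I k)"
      using good_fin_above[OF g pk] by (rule finite_subset[rotated]) (use pk in \<open>auto simp: I_def\<close>)
    then have "card (W \<inter> I k) \<le> card (X \<inter> I k)" using WX by (intro card_mono) auto
    then show "ennreal (v k) * of_nat (card (W \<inter> I k)) \<le> ennreal (v k) * of_nat (card (X \<inter> I k))"
      by (intro mult_left_mono) auto
  qed (auto simp: summableI)
  finally show ?thesis unfolding v_def I_def by (simp add: ennreal_of_nat_eq_real_of_nat)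
qed


lemma grid_identity:
  fixes c q A :: real and k :: nat
  assumes c: "c > 0" and q: "0 < q" "q < 1"
  shows "(c * q^k / q) powr (A + 1) * (1 / (c * q^k) - 1 / (c * q^k / q))
       = (1 - q) * q powr (-(A+1)) * c powr A * (q powr A)^k"
proof -
  define x where "x = c * q^k"
  have x: "x > 0" unfolding x_def using c q by simp
  have 1: "(x / q) powr (A + 1) = x powr (A+1) * q powr (-(A+1))"
  proof -
    have "(x/q) powr (A+1) = x powr (A+1) / q powr (A+1)" using x q by (auto intro: powr_divide)
    also have "\<dots> = x powr (A+1) * q powr (-(A+1))" by (simp only: powr_minus divide_inverse)
    finally show ?thesis .
  qed
  have 2: "x powr (A+1) = x powr A * x" using x by (simp add: powr_add)
  have 3: "x powr A = c powr A * (q powr A)^k"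
  proof -
    have "x powr A = c powr A * (q^k) powr A" unfolding x_def using c q by (simp add: powr_mult)
    also have "(q^k) powr A = (q powr A)^k"
      using q by (simp add: powr_realpow[symmetric] powr_powr mult.commute powr_power)
    finally show ?thesis .
  qed
  have "(x / q) powr (A + 1) * (1 / x - 1 / (x / q)) = x powr A * x * q powr (-(A+1)) * ((1 - q) / x)"
    unfolding 1 2 using x q by (simp add: field_simps)
  also have "\<dots> = (1 - q) * q powr (-(A+1)) * x powr A" using x by (simp add: field_simps)
  finally have "(x / q) powr (A + 1) * (1 / x - 1 / (x / q)) = (1 - q) * q powr (-(A+1)) * (c powr A * (q powr A)^k)"
    unfolding 3 .
  then show ?thesis unfolding x_def by (simp add: mult.assoc)
qed

context ppp begin

lemma cnt_meas[measurable]: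
  assumes "B \<in> sets borel" "B \<subseteq> {0<..}" "emeasure inv_sq_intensity B < \<infinity>"
  shows "(\<lambda>\<omega>. ennreal (real (card (Xi \<omega> \<inter> B)))) \<in> borel_measurable P"
proof -
  have "(\<lambda>\<omega>. card (Xi \<omega> \<inter> B)) \<in> measurable P (count_space UNIV)" by (rule cnt(2)[OF assms])
  moreover have "(\<lambda>k::nat. ennreal (real k)) \<in> borel_measurable (count_space UNIV)" by simp
  ultimately show ?thesis by (rule measurable_compose)
qed

lemma cnt_meas2[measurable]:
  assumes "B \<in> sets borel" "B \<subseteq> {0<..}" "emeasure inv_sq_intensity B < \<infinity>"
  shows "(\<lambda>\<omega>. real (card (Xi \<omega> \<inter> B))) \<in> borel_measurable P"
proof -
  have "(\<lambda>\<omega>. card (Xi \<omega> \<inter> B)) \<in> measurable P (count_space UNIV)" by (rule cnt(2)[OF assms])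
  moreover have "(\<lambda>k::nat. real k) \<in> borel_measurable (count_space UNIV)" by simp
  ultimately show ?thesis by (rule measurable_compose)
qed

lemma grid_set:
  assumes c: "c > 0" and q: "0 < q" "q < 1"
  shows "{c * q^k ..< c * q^k / q} \<in> sets borel" "{c * q^k ..< c * q^k / q} \<subseteq> {0<..}"
    "emeasure inv_sq_intensity {c * q^k ..< c * q^k / q} = ennreal (1 / (c * q^k) - 1 / (c * q^k / q))"
    "emeasure inv_sq_intensity {c * q^k ..< c * q^k / q} < \<infinity>"
proof -
  have p: "c * q^k > 0" using c q by simp
  have "c * q^k * q \<le> c * q^k" using p q by (intro mult_left_le) auto
  then have le: "c * q^k \<le> c * q^k / q" using q by (simp add: le_divide_eq)
  show "{c * q^k ..< c * q^k / q} \<in> sets borel" by simp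
  show "{c * q^k ..< c * q^k / q} \<subseteq> {0<..}" using p by auto
  show e: "emeasure inv_sq_intensity {c * q^k ..< c * q^k / q} = ennreal (1 / (c * q^k) - 1 / (c * q^k / q))"
    by (rule isi_atLeastLessThan[OF p le])
  show "emeasure inv_sq_intensity {c * q^k ..< c * q^k / q} < \<infinity>" unfolding e by simp
qed

lemma EH:
  assumes c: "c > 0" and q: "0 < q" "q < 1" and A: "A > 0"
  shows "(\<integral>\<^sup>+\<omega>. (\<Sum>k. ennreal ((c * q^k / q) powr (A+1)) * ennreal (real (card (Xi \<omega> \<inter> {c * q^k ..< c * q^k / q})))) \<partial>P)
    = ennreal ((1 - q) * q powr (-(A+1)) * c powr A / (1 - q powr A))"
proof -
  note gs = grid_set[OF c q]
  have "(\<integral>\<^sup>+\<omega>. (\<Sum>k. ennreal ((c * q^k / q) powr (A+1)) * ennreal (real (card (Xi \<omega> \<inter> {c * q^k ..< c * q^k / q})))) \<partial>P)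
     = (\<Sum>k. \<integral>\<^sup>+\<omega>. ennreal ((c * q^k / q) powr (A+1)) * ennreal (real (card (Xi \<omega> \<inter> {c * q^k ..< c * q^k / q}))) \<partial>P)"
    by (rule nn_integral_suminf) (use gs in measurable)
  also have "\<dots> = (\<Sum>k. ennreal ((c * q^k / q) powr (A+1)) * ennreal (1 / (c * q^k) - 1 / (c * q^k / q)))"
    by (subst nn_integral_cmult) (use gs cnt_mean[OF gs(1,2,4)] cnt_meas2[OF gs(1,2,4)] in \<open>auto simp: gs(3)\<close>)
  also have "\<dots> = (\<Sum>k. ennreal ((1 - q) * q powr (-(A+1)) * c powr A * (q powr A)^k))"
  proof (rule suminf_cong)
    fix k
    have p: "c * q^k > 0" using c q by simp
    have "1 / (c * q^k / q) \<le> 1 / (c * q^k)" using p q by (simp add: field_simps)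
    then have "ennreal ((c * q^k / q) powr (A+1)) * ennreal (1 / (c * q^k) - 1 / (c * q^k / q))
        = ennreal ((c * q^k / q) powr (A+1) * (1 / (c * q^k) - 1 / (c * q^k / q)))"
      by (intro ennreal_mult[symmetric]) auto
    then show "ennreal ((c * q^k / q) powr (A+1)) * ennreal (1 / (c * q^k) - 1 / (c * q^k / q))
        = ennreal ((1 - q) * q powr (-(A+1)) * c powr A * (q powr A)^k)"
      unfolding grid_identity[OF c q] .
  qed
  also have "\<dots> = ennreal ((1 - q) * q powr (-(A+1)) * c powr A / (1 - q powr A))"
  proof (rule suminf_ennreal_eq)
    show "0 \<le> (1 - q) * q powr (-(A+1)) * c powr A * (q powr A)^k" for k using q by simp
    have r: "q powr A < 1" using powr_less_mono2[OF A, of q 1] q by simp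
    have "(\<lambda>k. (q powr A)^k) sums (1 / (1 - q powr A))" by (rule geometric_sums) (use r in simp)
    from sums_mult[OF this, of "(1 - q) * q powr (-(A+1)) * c powr A"]
    show "(\<lambda>k. (1 - q) * q powr (-(A+1)) * c powr A * (q powr A)^k) sums ((1 - q) * q powr (-(A+1)) * c powr A / (1 - q powr A))"
      by simp
  qed
  finally show ?thesis .
qed

end

lemma F_wor_bound2:
  fixes w :: "nat \<Rightarrow> real"
  assumes wpos: "\<And>j. j \<in> {1..m} \<Longrightarrow> w j > 0" and c: "c > 0" and a: "a > 0"
  shows "(\<Sum>xs\<in>wor_lists m N. wor_prob w \<beta> m xs * (\<Sum>k<N. w (xs!k) powr a * indicator {..c} (w (xs!k))))
      \<le> N * c powr a"
proof -
  let ?p = "\<lambda>j. w j powr \<beta>" and ?g = "\<lambda>j. w j powr a * indicator {..c} (w j)"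
  have eq: "(\<Sum>xs\<in>wor_lists m N. wor_prob w \<beta> m xs * (\<Sum>k<N. w (xs!k) powr a * indicator {..c} (w (xs!k))))
     = (\<Sum>xs\<in>Lw {1..m} N. Qw ?p (sum ?p {1..m}) xs * (\<Sum>k<N. ?g (xs!k)))"
    unfolding wor_lists_Lw wor_prob_Qw ..
  have "(\<Sum>xs\<in>Lw {1..m} N. Qw ?p (sum ?p {1..m}) xs * (\<Sum>k<N. ?g (xs!k))) \<le> N * c powr a"
  proof (rule Qw_bound2)
    fix x assume "x \<in> {1..m}"
    then have "w x > 0" by (rule wpos)
    then show "?g x \<le> c powr a" using a by (auto simp: indicator_def intro: powr_mono2)
  qed auto
  then show ?thesis unfolding eq .
qed

context ppp begin

lemma good_D:
  fixes \<beta> \<rho> L :: real and N m K :: nat and n :: "nat \<Rightarrow> nat" and \<omega>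
  assumes \<beta>: "0 < \<beta>" and \<rho>: "0 < \<rho>"
    and nmono: "\<And>s. 2 \<le> s \<Longrightarrow> s \<le> K \<Longrightarrow> n (s-1) \<le> n s"
    and nK: "n K = m" and K: "K \<ge> 1" and n1: "N \<le> n 1 + 1" and npos: "\<And>s. 2 \<le> s \<Longrightarrow> s \<le> K \<Longrightarrow> n s > 0"
    and Ldef: "L = (\<Sum>s=2..K. real (n s - n (s-1)) * (\<rho> / real (n s)) powr \<beta>)"
    and g: "good_set X"
    and cnt: "\<And>s. 2 \<le> s \<Longrightarrow> s \<le> K \<Longrightarrow> n s < card (X \<inter> {\<rho> / real (n s)..})"
    and D: "D \<subseteq> {1..m}" "card D < N"
  shows "L \<le> sum (\<lambda>j. desc_atom X j powr \<beta>) ({1..m} - D)"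
proof -
  let ?w = "desc_atom X"
  let ?p = "\<lambda>j. ?w j powr \<beta>"
  have wpos: "j \<ge> 1 \<Longrightarrow> ?w j > 0" for j using desc_atom_pos[OF g] by simp
  have anti: "?p j \<le> ?p i" if "1 \<le> i" "i \<le> j" "j \<le> m" for i j
    using desc_atom_mono[OF g that(1,2)] wpos[of j] that \<beta> by (intro powr_mono2) auto
  have nn: "?p j \<ge> 0" for j by simp
  have "sum ?p {n 1<..m} \<le> sum ?p {N..m}"
    using n1 by (intro sum_mono2) auto
  also have "\<dots> \<le> sum ?p ({1..m} - D)" by (rule pairing[OF anti nn D])
  finally have 1: "sum ?p {n 1<..m} \<le> sum ?p ({1..m} - D)" .
  have low: "(\<rho> / real (n s)) powr \<beta> \<le> ?p j" if s: "2 \<le> s" "s \<le> K" and j: "n (s-1) < j" "j \<le> n s" for s j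
  proof -
    have ns: "n s \<ge> 1" using npos[OF s] by simp
    have pos: "\<rho> / real (n s) > 0" using \<rho> ns by simp
    have "card {x\<in>X. \<rho> / real (n s) \<le> x} \<ge> n s"
    proof -
      have "{x\<in>X. \<rho> / real (n s) \<le> x} = X \<inter> {\<rho> / real (n s)..}" by auto
      then show ?thesis using cnt[OF s] by simp
    qed
    then have "?w (n s) \<ge> \<rho> / real (n s)" by (intro desc_atom_ge[OF g ns pos])
    also have "?w (n s) \<le> ?w j" using j by (intro desc_atom_mono[OF g]) auto
    finally show ?thesis using pos \<beta> by (intro powr_mono2) auto
  qed
  have "L \<le> sum ?p {n 1<..n K}" unfolding Ldef
    by (rule block_sum[of K n "\<lambda>s. (\<rho> / real (n s)) powr \<beta>" ?p K]) (use nmono low K in auto)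
  then show ?thesis using 1 nK by simp
qed

lemma main_est:
  fixes \<beta> a c \<rho> q L :: real and N m K :: nat and n :: "nat \<Rightarrow> nat"
  assumes \<beta>: "0 < \<beta>" "\<beta> < 1" and a: "a > 0" and A: "a + \<beta> - 1 > 0" and c: "c > 0"
    and \<rho>: "0 < \<rho>" "\<rho> < 1" and q: "0 < q" "q < 1" and N: "N \<ge> 1"
    and nmono: "\<And>s. 2 \<le> s \<Longrightarrow> s \<le> K \<Longrightarrow> n (s-1) \<le> n s"
    and nK: "n K = m" and K: "K \<ge> 1" and n1: "N \<le> n 1 + 1" and npos: "\<And>s. 2 \<le> s \<Longrightarrow> s \<le> K \<Longrightarrow> n s > 0"
    and Ldef: "L = (\<Sum>s=2..K. real (n s - n (s-1)) * (\<rho> / real (n s)) powr \<beta>)" and Lpos: "L > 0"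
  shows "(\<integral>\<^sup>+\<omega>. ennreal (\<Sum>xs\<in>wor_lists m N. wor_prob (desc_atom (Xi \<omega>)) \<beta> m xs *
            (\<Sum>k<N. desc_atom (Xi \<omega>) (xs ! k) powr a * indicator {..c} (desc_atom (Xi \<omega>) (xs ! k)))) \<partial>P)
     \<le> ennreal (N / L) * ennreal ((1 - q) * q powr (-(a+\<beta>)) * c powr (a+\<beta>-1) / (1 - q powr (a+\<beta>-1)))
       + ennreal (N * c powr a) * ennreal (\<Sum>s=2..K. 1 / (real (n s) * hfun \<rho>))"
    "(\<integral>\<^sup>+\<omega>. ennreal (\<Sum>xs\<in>wr_lists m N. wr_prob (desc_atom (Xi \<omega>)) \<beta> m xs *
            (\<Sum>k<N. desc_atom (Xi \<omega>) (xs ! k) powr a * indicator {..c} (desc_atom (Xi \<omega>) (xs ! k)))) \<partial>P)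
     \<le> ennreal (N / L) * ennreal ((1 - q) * q powr (-(a+\<beta>)) * c powr (a+\<beta>-1) / (1 - q powr (a+\<beta>-1)))
       + ennreal (N * c powr a) * ennreal (\<Sum>s=2..K. 1 / (real (n s) * hfun \<rho>))"
proof -
  define Gc where "Gc = (\<Union>s\<in>{2..K}. {\<omega>\<in>space P. card (Xi \<omega> \<inter> {\<rho> / real (n s)..}) \<le> n s})"
  define Hm where "Hm \<omega> = (\<Sum>k. ennreal ((c * q^k / q) powr (a+\<beta>)) * ennreal (real (card (Xi \<omega> \<inter> {c * q^k ..< c * q^k / q}))))" for \<omega>
  define Fo where "Fo \<omega> = (\<Sum>xs\<in>wor_lists m N. wor_prob (desc_atom (Xi \<omega>)) \<beta> m xs *
            (\<Sum>k<N. desc_atom (Xi \<omega>) (xs ! k) powr a * indicator {..c} (desc_atom (Xi \<omega>) (xs ! k))))" for \<omega>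
  define Fr where "Fr \<omega> = (\<Sum>xs\<in>wr_lists m N. wr_prob (desc_atom (Xi \<omega>)) \<beta> m xs *
            (\<Sum>k<N. desc_atom (Xi \<omega>) (xs ! k) powr a * indicator {..c} (desc_atom (Xi \<omega>) (xs ! k))))" for \<omega>
  define E1 where "E1 = (1 - q) * q powr (-(a+\<beta>)) * c powr (a+\<beta>-1) / (1 - q powr (a+\<beta>-1))"
  define E2 where "E2 = (\<Sum>s=2..K. 1 / (real (n s) * hfun \<rho>))"
  have yp: "\<rho> / real (n s) > 0" if "2 \<le> s" "s \<le> K" for s using npos[OF that] \<rho> by simp
  have Bs: "{\<rho> / real (n s)..} \<in> sets borel" "{\<rho> / real (n s)..} \<subseteq> {0<..}"
    "emeasure inv_sq_intensity {\<rho> / real (n s)..} < \<infinity>" if "2 \<le> s" "s \<le> K" for s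
    using yp[OF that] isi_atLeast_fin[OF yp[OF that]] by (auto intro: less_le_trans)
  have Gc_sets: "Gc \<in> sets P" unfolding Gc_def using cnt_sets(2)[OF Bs] by auto
  have prob_Gc: "prob Gc \<le> E2"
  proof -
    have "prob Gc \<le> (\<Sum>s\<in>{2..K}. prob {\<omega>\<in>space P. card (Xi \<omega> \<inter> {\<rho> / real (n s)..}) \<le> n s})"
      unfolding Gc_def by (rule finite_measure_subadditive_finite) (use cnt_sets(2)[OF Bs] in auto)
    also have "\<dots> \<le> E2" unfolding E2_def
      by (intro sum_mono cnt_tail \<rho>) (use npos in auto)
    finally show ?thesis .
  qed
  have EHm: "(\<integral>\<^sup>+\<omega>. Hm \<omega> \<partial>P) = ennreal E1"
    using EH[OF c q A] unfolding Hm_def E1_def by (simp add: algebra_simps)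
  note gs = grid_set[OF c q]
  have Hm_meas: "Hm \<in> borel_measurable P" unfolding Hm_def using gs by measurable
  have e: "a + \<beta> > 0" using a \<beta> by simp
  have K2: "K \<ge> 2"
  proof (rule ccontr)
    assume "\<not> K \<ge> 2"
    then have "{2..K} = {}" by auto
    then show False using Lpos Ldef by simp
  qed
  have m1: "m \<ge> 1" using npos[OF K2 order.refl] nK by simp
  have pw: "ennreal (Fo \<omega>) \<le> ennreal (N / L) * Hm \<omega> + ennreal (N * c powr a) * indicator Gc \<omega> \<and>
            ennreal (Fr \<omega>) \<le> ennreal (N / L) * Hm \<omega> + ennreal (N * c powr a) * indicator Gc \<omega>"
    if w: "\<omega> \<in> space P" "good_set (Xi \<omega>)" for \<omega>
  proof -
    let ?w = "desc_atom (Xi \<omega>)"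
    have wpos: "\<And>j. j \<in> {1..m} \<Longrightarrow> ?w j > 0" using desc_atom_pos[OF w(2)] by auto
    have S: "sum (\<lambda>j. ?w j powr \<beta>) {1..m} > 0"
    proof (rule sum_pos)
      show "{1..m} \<noteq> {}" using m1 by simp
      fix j assume "j \<in> {1..m}"
      then have "?w j > 0" by (rule wpos)
      then show "0 < ?w j powr \<beta>" by simp
    qed simp
    have b2: "Fo \<omega> \<le> N * c powr a" "Fr \<omega> \<le> N * c powr a"
      unfolding Fo_def Fr_def using F_wor_bound2[OF wpos c a] F_wr_bound(2)[OF wpos c a S order.refl]
      by auto
    have H: "ennreal (\<Sum>j=1..m. ?w j powr (a+\<beta>) * indicator {..c} (?w j)) \<le> Hm \<omega>"
      unfolding Hm_def by (rule H_bound[OF w(2) q c e])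
    show ?thesis
    proof (cases "\<omega> \<in> Gc")
      case True
      then show ?thesis using b2 by (auto intro: order.trans[OF ennreal_leI] add_increasing)
    next
      case False
      have cnt: "n s < card (Xi \<omega> \<inter> {\<rho> / real (n s)..})" if "2 \<le> s" "s \<le> K" for s
      proof -
        have "\<not> card (Xi \<omega> \<inter> {\<rho> / real (n s)..}) \<le> n s" using False w(1) that unfolding Gc_def by auto
        then show ?thesis by simp
      qed
      have D: "L \<le> sum (\<lambda>j. ?w j powr \<beta>) ({1..m} - D)" if "D \<subseteq> {1..m}" "card D < N" for D
        by (rule good_D[OF \<beta>(1) \<rho>(1) nmono nK K n1 npos Ldef w(2) cnt that])
      have LS: "L \<le> sum (\<lambda>j. ?w j powr \<beta>) {1..m}" using D[of "{}"] N by simp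
      have SF: "(\<Sum>j=1..m. ?w j powr (a+\<beta>) * indicator {..c} (?w j)) \<ge> 0"
        by (intro sum_nonneg) (auto simp: indicator_def)
      have "Fo \<omega> \<le> N * (\<Sum>j=1..m. ?w j powr (a+\<beta>) * indicator {..c} (?w j)) / L"
        "Fr \<omega> \<le> N * (\<Sum>j=1..m. ?w j powr (a+\<beta>) * indicator {..c} (?w j)) / L"
        unfolding Fo_def Fr_def using F_wor_bound(1)[OF wpos c a Lpos D] F_wr_bound(1)[OF wpos c a Lpos LS]
        by auto
      then have f: "ennreal (Fo \<omega>) \<le> ennreal (N / L) * ennreal (\<Sum>j=1..m. ?w j powr (a+\<beta>) * indicator {..c} (?w j))"
        "ennreal (Fr \<omega>) \<le> ennreal (N / L) * ennreal (\<Sum>j=1..m. ?w j powr (a+\<beta>) * indicator {..c} (?w j))"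
        using SF Lpos by (auto simp: ennreal_mult[symmetric] intro!: ennreal_leI)
      have g: "ennreal (N / L) * ennreal (\<Sum>j=1..m. ?w j powr (a+\<beta>) * indicator {..c} (?w j)) \<le> ennreal (N / L) * Hm \<omega>"
        using H by (rule mult_left_mono) simp
      show ?thesis using order.trans[OF f(1) g] order.trans[OF f(2) g] False by simp
    qed
  qed
  have AEpw: "AE \<omega> in P. ennreal (Fo \<omega>) \<le> ennreal (N / L) * Hm \<omega> + ennreal (N * c powr a) * indicator Gc \<omega> \<and>
            ennreal (Fr \<omega>) \<le> ennreal (N / L) * Hm \<omega> + ennreal (N * c powr a) * indicator Gc \<omega>"
    using AE_good AE_space by eventually_elim (use pw in auto)
  have int: "(\<integral>\<^sup>+\<omega>. ennreal (N / L) * Hm \<omega> + ennreal (N * c powr a) * indicator Gc \<omega> \<partial>P)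
      \<le> ennreal (N / L) * ennreal E1 + ennreal (N * c powr a) * ennreal E2"
  proof -
    have "(\<integral>\<^sup>+\<omega>. ennreal (N / L) * Hm \<omega> + ennreal (N * c powr a) * indicator Gc \<omega> \<partial>P)
       = ennreal (N / L) * (\<integral>\<^sup>+\<omega>. Hm \<omega> \<partial>P) + ennreal (N * c powr a) * emeasure P Gc"
      using Hm_meas Gc_sets by (simp add: nn_integral_add nn_integral_cmult nn_integral_cmult_indicator)
    also have "\<dots> \<le> ennreal (N / L) * ennreal E1 + ennreal (N * c powr a) * ennreal E2"
      unfolding EHm using prob_Gc by (intro add_mono mult_left_mono) (auto simp: emeasure_eq_measure intro: ennreal_leI)
    finally show ?thesis .
  qed
  show "(\<integral>\<^sup>+\<omega>. ennreal (\<Sum>xs\<in>wor_lists m N. wor_prob (desc_atom (Xi \<omega>)) \<beta> m xs *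
            (\<Sum>k<N. desc_atom (Xi \<omega>) (xs ! k) powr a * indicator {..c} (desc_atom (Xi \<omega>) (xs ! k)))) \<partial>P)
     \<le> ennreal (N / L) * ennreal ((1 - q) * q powr (-(a+\<beta>)) * c powr (a+\<beta>-1) / (1 - q powr (a+\<beta>-1)))
       + ennreal (N * c powr a) * ennreal (\<Sum>s=2..K. 1 / (real (n s) * hfun \<rho>))"
    using order.trans[OF nn_integral_mono_AE int] AEpw unfolding Fo_def E1_def E2_def by auto
  show "(\<integral>\<^sup>+\<omega>. ennreal (\<Sum>xs\<in>wr_lists m N. wr_prob (desc_atom (Xi \<omega>)) \<beta> m xs *
            (\<Sum>k<N. desc_atom (Xi \<omega>) (xs ! k) powr a * indicator {..c} (desc_atom (Xi \<omega>) (xs ! k)))) \<partial>P)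
     \<le> ennreal (N / L) * ennreal ((1 - q) * q powr (-(a+\<beta>)) * c powr (a+\<beta>-1) / (1 - q powr (a+\<beta>-1)))
       + ennreal (N * c powr a) * ennreal (\<Sum>s=2..K. 1 / (real (n s) * hfun \<rho>))"
    using order.trans[OF nn_integral_mono_AE int] AEpw unfolding Fr_def E1_def E2_def by auto
qed

end

lemma powr_step:
  fixes \<beta> r :: real
  assumes \<beta>: "0 < \<beta>" "\<beta> < 1" and r: "r \<ge> 1"
  shows "(r+1) powr (1-\<beta>) - r powr (1-\<beta>) \<le> (1-\<beta>) * r powr (-\<beta>)"
proof -
  have "\<exists>z. r < z \<and> z < r+1 \<and> (r+1) powr (1-\<beta>) - r powr (1-\<beta>) = ((r+1) - r) * ((1-\<beta>) * z powr (1-\<beta>-1))"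
    by (rule MVT2) (use r in \<open>auto intro!: derivative_eq_intros\<close>)
  then obtain z where z: "r < z" "(r+1) powr (1-\<beta>) - r powr (1-\<beta>) = (1-\<beta>) * z powr (-\<beta>)" by auto
  have "z powr (-\<beta>) \<le> r powr (-\<beta>)" using z r \<beta> by (intro powr_mono2') auto
  then show ?thesis using z \<beta> by (simp add: mult_left_mono)
qed

lemma sum_powr_lower:
  fixes \<beta> :: real
  assumes \<beta>: "0 < \<beta>" "\<beta> < 1"
  shows "K \<ge> 1 \<Longrightarrow> ((real K + 1) powr (1-\<beta>) - 2 powr (1-\<beta>)) / (1-\<beta>) \<le> (\<Sum>r=2..K. real r powr (-\<beta>))"
proof (induction K)
  case 0 then show ?case by simp
next
  case (Suc K)
  show ?case
  proof (cases "K = 0")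
    case True then show ?thesis by simp
  next
    case False
    have IH: "((real K + 1) powr (1-\<beta>) - 2 powr (1-\<beta>)) / (1-\<beta>) \<le> (\<Sum>r=2..K. real r powr (-\<beta>))"
      using Suc False by simp
    have st: "(real (Suc K) + 1) powr (1-\<beta>) - real (Suc K) powr (1-\<beta>) \<le> (1-\<beta>) * real (Suc K) powr (-\<beta>)"
      using powr_step[OF \<beta>, of "real (Suc K)"] by simp
    have "{2..Suc K} = insert (Suc K) {2..K}" using False by auto
    then have sum: "(\<Sum>r=2..Suc K. real r powr (-\<beta>)) = real (Suc K) powr (-\<beta>) + (\<Sum>r=2..K. real r powr (-\<beta>))"
      by simp
    have "((real (Suc K) + 1) powr (1-\<beta>) - 2 powr (1-\<beta>)) / (1-\<beta>)
       = ((real (Suc K) + 1) powr (1-\<beta>) - real (Suc K) powr (1-\<beta>)) / (1-\<beta>) + ((real K + 1) powr (1-\<beta>) - 2 powr (1-\<beta>)) / (1-\<beta>)"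
      by (simp add: diff_divide_distrib add.commute)
    also have "\<dots> \<le> real (Suc K) powr (-\<beta>) + (\<Sum>r=2..K. real r powr (-\<beta>))"
      using st IH \<beta> by (intro add_mono) (auto simp: divide_le_eq mult.commute)
    finally show ?thesis unfolding sum .
  qed
qed

definition nseq :: "nat \<Rightarrow> nat \<Rightarrow> nat \<Rightarrow> nat" where
  "nseq m K r = nat \<lfloor>real m * real r / real K\<rfloor>"

lemma nseq_le: "real (nseq m K r) \<le> real m * real r / real K"
proof -
  have "real m * real r / real K \<ge> 0" by simp
  then show ?thesis unfolding nseq_def by (simp add: of_nat_nat)
qed

lemma nseq_gt: "real (nseq m K r) > real m * real r / real K - 1"
proof -
  have nn: "real m * real r / real K \<ge> 0" by simp
  then have "\<lfloor>real m * real r / real K\<rfloor> \<ge> 0" by simp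
  then have "real (nseq m K r) = real_of_int \<lfloor>real m * real r / real K\<rfloor>" unfolding nseq_def by simp
  then show ?thesis by linarith
qed

lemma nseq_K: "K \<ge> 1 \<Longrightarrow> nseq m K K = m"
  unfolding nseq_def by simp

lemma nseq_mono: "r \<le> s \<Longrightarrow> nseq m K r \<le> nseq m K s"
  unfolding nseq_def
  by (intro nat_mono floor_mono divide_right_mono mult_left_mono) auto

lemma L_lower:
  fixes \<rho> \<beta> :: real and m K :: nat
  assumes \<beta>: "0 < \<beta>" "\<beta> < 1" and \<rho>: "0 < \<rho>" "\<rho> < 1" and K: "K \<ge> 2"
    and mK: "real m * (1 - \<rho>) \<ge> real K"
  shows "(\<rho> * m / K) * (\<rho> * K / m) powr \<beta> * (\<Sum>r=2..K. real r powr (-\<beta>))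
       \<le> (\<Sum>s=2..K. real (nseq m K s - nseq m K (s-1)) * (\<rho> / real (nseq m K s)) powr \<beta>)"
    and "\<And>s. 2 \<le> s \<Longrightarrow> s \<le> K \<Longrightarrow> real (nseq m K s) \<ge> \<rho> * m / K"
proof -
  have "real m * (1 - \<rho>) > 0" using mK K by linarith
  then have m: "real m > 0" using \<rho> by (simp add: zero_less_mult_iff)
  have Kp: "real K > 0" using K by simp
  have d: "real (nseq m K s - nseq m K (s-1)) \<ge> \<rho> * m / K" if s: "2 \<le> s" "s \<le> K" for s
  proof -
    have mono: "nseq m K (s-1) \<le> nseq m K s" by (rule nseq_mono) simp
    have "real (nseq m K s - nseq m K (s-1)) = real (nseq m K s) - real (nseq m K (s-1))"
      using mono by (simp add: of_nat_diff)
    also have "\<dots> \<ge> (real m * real s / real K - 1) - real m * real (s-1) / real K"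
      using nseq_gt[where m=m and K=K and r=s] nseq_le[where m=m and K=K and r="s-1"] by linarith
    also have "(real m * real s / real K - 1) - real m * real (s-1) / real K = real m / real K - 1"
      using s Kp by (simp add: of_nat_diff field_simps)
    also have "real m / real K - 1 \<ge> \<rho> * m / K"
    proof -
      have "real m - real K \<ge> \<rho> * real m" using mK by (simp add: algebra_simps)
      then show ?thesis using Kp by (simp add: field_simps)
    qed
    finally show ?thesis .
  qed
  show ns: "real (nseq m K s) \<ge> \<rho> * m / K" if s: "2 \<le> s" "s \<le> K" for s
  proof -
    have "real (nseq m K s - nseq m K (s-1)) \<le> real (nseq m K s)" by simp
    then show ?thesis using d[OF s] by linarith
  qed
  have "(\<rho> * m / K) * (\<rho> * K / m) powr \<beta> * (\<Sum>r=2..K. real r powr (-\<beta>))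
      = (\<Sum>s=2..K. (\<rho> * m / K) * (\<rho> * K / (m * s)) powr \<beta>)"
  proof -
    have "(\<rho> * K / (m * s)) powr \<beta> = (\<rho> * K / m) powr \<beta> * real s powr (-\<beta>)" if "s \<ge> 2" for s
    proof -
      have "(\<rho> * K / (m * s)) = (\<rho> * K / m) / real s" by simp
      then have "(\<rho> * K / (m * s)) powr \<beta> = (\<rho> * K / m) powr \<beta> / real s powr \<beta>"
        using \<rho> Kp m that by (simp add: powr_divide powr_mult)
      then show ?thesis by (simp add: powr_minus divide_inverse)
    qed
    then show ?thesis by (simp add: sum_distrib_left mult.assoc)
  qed
  also have "\<dots> \<le> (\<Sum>s=2..K. real (nseq m K s - nseq m K (s-1)) * (\<rho> / real (nseq m K s)) powr \<beta>)"
  proof (rule sum_mono)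
    fix s assume "s \<in> {2..K}"
    then have s: "2 \<le> s" "s \<le> K" by auto
    have "\<rho> * m / K > 0" using \<rho> m Kp by simp
    then have np: "real (nseq m K s) > 0" using ns[OF s] by linarith
    have "\<rho> * K / (m * s) \<le> \<rho> / real (nseq m K s)"
    proof -
      have "real (nseq m K s) \<le> real m * real s / real K" by (rule nseq_le)
      then have "real (nseq m K s) * real K \<le> real m * real s" using Kp by (simp add: field_simps)
      then show ?thesis using np \<rho> m s Kp by (simp add: field_simps mult_left_mono)
    qed
    then have "(\<rho> * K / (m * s)) powr \<beta> \<le> (\<rho> / real (nseq m K s)) powr \<beta>"
      using \<rho> \<beta> Kp m s by (intro powr_mono2) auto
    then show "(\<rho> * m / K) * (\<rho> * K / (m * s)) powr \<beta> \<le> real (nseq m K s - nseq m K (s-1)) * (\<rho> / real (nseq m K s)) powr \<beta>"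
      using d[OF s] \<rho> m Kp by (intro mult_mono) auto
  qed
  finally show "(\<rho> * m / K) * (\<rho> * K / m) powr \<beta> * (\<Sum>r=2..K. real r powr (-\<beta>))
       \<le> (\<Sum>s=2..K. real (nseq m K s - nseq m K (s-1)) * (\<rho> / real (nseq m K s)) powr \<beta>)" .
qed

context ppp begin

lemma step_N:
  fixes \<gamma> \<beta> chi a b \<delta> A \<rho> q :: real and K N :: nat
  assumes \<gamma>: "\<gamma> > 1" and \<beta>: "0 < \<beta>" "\<beta> < 1" and chi: "chi = (1 - \<gamma> * (1 - \<beta>)) / \<beta>"
    and a: "a > 0" and b: "b \<ge> 0" and \<delta>: "\<delta> > 0" and Adef: "A = a + \<beta> - 1" and A: "A > 0"
    and \<rho>: "0 < \<rho>" "\<rho> < 1" and q: "0 < q" "q < 1" and K: "K \<ge> 2"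
    and N: "N \<ge> 1" and mbig: "real (nat \<lceil>real N powr \<gamma>\<rceil>) \<ge> real K * real N + real K / (1 - \<rho>)"
  defines "C \<equiv> \<delta> powr A * ((1-q) * q powr (-(a+\<beta>)) / (1 - q powr A)) *
      (real K / (\<rho> * (\<rho> * real K) powr \<beta> * (\<Sum>r=2..K. real r powr (-\<beta>))))"
  defines "R \<equiv> \<delta> powr a * (real K)^2 / (\<rho> * hfun \<rho>) * real N powr (-\<gamma>*\<beta>)"
  shows "ennreal (real N powr (- chi * \<beta> + b * A)) *
        (\<integral>\<^sup>+ \<omega>. ennreal (\<Sum>xs\<in>wor_lists (nat \<lceil>real N powr \<gamma>\<rceil>) N.
            wor_prob (desc_atom (Xi \<omega>)) \<beta> (nat \<lceil>real N powr \<gamma>\<rceil>) xs *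
            (\<Sum>k<N. desc_atom (Xi \<omega>) (xs ! k) powr a *
               indicator {..\<delta> * real N powr (- b)} (desc_atom (Xi \<omega>) (xs ! k)))) \<partial>P) \<le> ennreal (C + R)"
    "ennreal (real N powr (- chi * \<beta> + b * A)) *
        (\<integral>\<^sup>+ \<omega>. ennreal (\<Sum>xs\<in>wr_lists (nat \<lceil>real N powr \<gamma>\<rceil>) N.
            wr_prob (desc_atom (Xi \<omega>)) \<beta> (nat \<lceil>real N powr \<gamma>\<rceil>) xs *
            (\<Sum>k<N. desc_atom (Xi \<omega>) (xs ! k) powr a *
               indicator {..\<delta> * real N powr (- b)} (desc_atom (Xi \<omega>) (xs ! k)))) \<partial>P) \<le> ennreal (C + R)"
proof -
  define m where "m = nat \<lceil>real N powr \<gamma>\<rceil>"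
  define c where "c = \<delta> * real N powr (- b)"
  define n where "n = nseq m K"
  define S where "S = (\<Sum>r=2..K. real r powr (-\<beta>))"
  define L where "L = (\<Sum>s=2..K. real (n s - n (s-1)) * (\<rho> / real (n s)) powr \<beta>)"
  define Z where "Z = (1-q) * q powr (-(a+\<beta>)) / (1 - q powr A)"
  define E2 where "E2 = (\<Sum>s=2..K. 1 / (real (n s) * hfun \<rho>))"
  define sN where "sN = real N powr (- chi * \<beta> + b * A)"
  have Np: "real N \<ge> 1" using N by simp
  have Kp: "real K > 0" using K by simp
  have mge: "real m \<ge> real N powr \<gamma>" unfolding m_def by linarith
  have m1: "real m * (1 - \<rho>) \<ge> real K"
  proof -
    have "real m \<ge> real K / (1 - \<rho>)" using mbig Kp Np unfolding m_def[symmetric]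
      by (smt (verit) mult_nonneg_nonneg of_nat_0_le_iff)
    then show ?thesis using \<rho> by (simp add: field_simps)
  qed
  have mKN: "real m \<ge> real K * real N" using mbig \<rho> Kp unfolding m_def[symmetric]
    by (smt (verit) divide_nonneg_pos)
  have mpos: "real m > 0" using mKN Kp Np by (smt (verit) mult_pos_pos)
  have hp: "hfun \<rho> > 0" using hfun_pos \<rho> by simp
  have cpos: "c > 0" unfolding c_def using \<delta> Np by simp
  have Spos: "S > 0" unfolding S_def using K by (intro sum_pos) auto
  note LL = L_lower[OF \<beta> \<rho> K m1]
  define Lb where "Lb = (\<rho> * m / K) * (\<rho> * K / m) powr \<beta> * S"
  have Lb: "Lb \<le> L" unfolding Lb_def L_def S_def n_def using LL(1) .
  have Lbpos: "Lb > 0" unfolding Lb_def using \<rho> mpos Kp Spos by simp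
  have Lpos: "L > 0" using Lb Lbpos by simp
  have ns: "real (n s) \<ge> \<rho> * m / K" if "2 \<le> s" "s \<le> K" for s unfolding n_def using LL(2)[OF that] .
  have npos: "n s > 0" if "2 \<le> s" "s \<le> K" for s
  proof -
    have "\<rho> * m / K > 0" using \<rho> mpos Kp by simp
    then show ?thesis using ns[OF that] by simp
  qed
  have n1: "N \<le> n 1 + 1"
  proof -
    have "real (n 1) > real m * 1 / real K - 1" unfolding n_def using nseq_gt[where m=m and K=K and r=1] by simp
    moreover have "real m / real K \<ge> real N" using mKN Kp by (simp add: field_simps)
    ultimately have "real (n 1) > real N - 1" by simp
    then show ?thesis by linarith
  qed
  have Z: "Z \<ge> 0"
  proof -
    have "q powr A < 1" using powr_less_mono2[OF A, of q 1] q by simp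
    then show ?thesis unfolding Z_def using q by simp
  qed
  have ME: "(\<integral>\<^sup>+\<omega>. ennreal (\<Sum>xs\<in>wor_lists m N. wor_prob (desc_atom (Xi \<omega>)) \<beta> m xs *
            (\<Sum>k<N. desc_atom (Xi \<omega>) (xs ! k) powr a * indicator {..c} (desc_atom (Xi \<omega>) (xs ! k)))) \<partial>P)
     \<le> ennreal (N / L) * ennreal (Z * c powr A) + ennreal (N * c powr a) * ennreal E2"
    "(\<integral>\<^sup>+\<omega>. ennreal (\<Sum>xs\<in>wr_lists m N. wr_prob (desc_atom (Xi \<omega>)) \<beta> m xs *
            (\<Sum>k<N. desc_atom (Xi \<omega>) (xs ! k) powr a * indicator {..c} (desc_atom (Xi \<omega>) (xs ! k)))) \<partial>P)
     \<le> ennreal (N / L) * ennreal (Z * c powr A) + ennreal (N * c powr a) * ennreal E2"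
  proof -
    have A': "0 < a+\<beta>-1" using A Adef by simp
    have nm: "n (s-1) \<le> n s" if "2 \<le> s" "s \<le> K" for s unfolding n_def by (rule nseq_mono) simp
    have nK: "n K = m" unfolding n_def using K by (simp add: nseq_K)
    have K1: "K \<ge> 1" using K by simp
    have eqZ: "(1 - q) * q powr (-(a+\<beta>)) * c powr (a+\<beta>-1) / (1 - q powr (a+\<beta>-1)) = Z * c powr A"
      unfolding Z_def Adef by simp
    note R = main_est[OF \<beta> a A' cpos \<rho> q N nm nK K1 n1 npos L_def Lpos]
    show "(\<integral>\<^sup>+\<omega>. ennreal (\<Sum>xs\<in>wor_lists m N. wor_prob (desc_atom (Xi \<omega>)) \<beta> m xs *
            (\<Sum>k<N. desc_atom (Xi \<omega>) (xs ! k) powr a * indicator {..c} (desc_atom (Xi \<omega>) (xs ! k)))) \<partial>P)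
     \<le> ennreal (N / L) * ennreal (Z * c powr A) + ennreal (N * c powr a) * ennreal E2"
      using R(1) unfolding eqZ E2_def .
    show "(\<integral>\<^sup>+\<omega>. ennreal (\<Sum>xs\<in>wr_lists m N. wr_prob (desc_atom (Xi \<omega>)) \<beta> m xs *
            (\<Sum>k<N. desc_atom (Xi \<omega>) (xs ! k) powr a * indicator {..c} (desc_atom (Xi \<omega>) (xs ! k)))) \<partial>P)
     \<le> ennreal (N / L) * ennreal (Z * c powr A) + ennreal (N * c powr a) * ennreal E2"
      using R(2) unfolding eqZ E2_def .
  qed
  define x where "x = real N"
  have x1: "x \<ge> 1" unfolding x_def using Np .
  have chib: "chi * \<beta> = 1 - \<gamma> * (1 - \<beta>)" unfolding chi using \<beta> by simp
  have cA: "c powr A = \<delta> powr A * x powr (-b*A)" unfolding c_def x_def using \<delta> Np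
    by (simp add: powr_mult powr_powr)
  have ca: "c powr a = \<delta> powr a * x powr (-b*a)" unfolding c_def x_def using \<delta> Np
    by (simp add: powr_mult powr_powr)
  have sN: "sN = x powr (- chi * \<beta> + b * A)" unfolding sN_def x_def ..
  have e1: "sN * x * c powr A = \<delta> powr A * x powr (\<gamma> * (1 - \<beta>))"
  proof -
    have "sN * x * c powr A = \<delta> powr A * (x powr (- chi * \<beta> + b * A) * x powr 1 * x powr (-b*A))"
      unfolding sN cA using x1 by simp
    also have "x powr (- chi * \<beta> + b * A) * x powr 1 * x powr (-b*A) = x powr (- chi * \<beta> + b * A + 1 + (-b*A))"
      by (simp only: powr_add)
    also have "- chi * \<beta> + b * A + 1 + (-b*A) = \<gamma> * (1 - \<beta>)" using chib by simp
    finally show ?thesis .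
  qed
  have e2: "sN * x * c powr a \<le> \<delta> powr a * x powr (\<gamma> * (1 - \<beta>))"
  proof -
    have "sN * x * c powr a = \<delta> powr a * (x powr (- chi * \<beta> + b * A) * x powr 1 * x powr (-b*a))"
      unfolding sN ca using x1 by simp
    also have "x powr (- chi * \<beta> + b * A) * x powr 1 * x powr (-b*a) = x powr (- chi * \<beta> + b * A + 1 + (-b*a))"
      by (simp only: powr_add)
    also have "- chi * \<beta> + b * A + 1 + (-b*a) = \<gamma> * (1 - \<beta>) + b * (\<beta> - 1)"
    proof -
      have "b * A = b * a + b * \<beta> - b" unfolding Adef by (simp add: algebra_simps)
      then show ?thesis using chib by (simp add: algebra_simps)
    qed
    also have "x powr (\<gamma> * (1 - \<beta>) + b * (\<beta> - 1)) \<le> x powr (\<gamma> * (1 - \<beta>))"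
      using x1 b \<beta> by (intro powr_mono) (auto simp: mult_nonneg_nonpos)
    finally show ?thesis using \<delta> by (simp add: mult_left_mono)
  qed
  have xm: "x powr (\<gamma> * (1 - \<beta>)) \<le> real m powr (1 - \<beta>)"
  proof -
    have "x powr (\<gamma> * (1 - \<beta>)) = (x powr \<gamma>) powr (1 - \<beta>)" by (simp add: powr_powr)
    also have "\<dots> \<le> real m powr (1 - \<beta>)" using mge x1 \<beta> unfolding x_def by (intro powr_mono2) auto
    finally show ?thesis .
  qed
  have Lbeq: "Lb = \<rho> * (\<rho> * K) powr \<beta> * S * real m powr (1 - \<beta>) / K"
  proof -
    have f1: "(\<rho> * K / m) powr \<beta> = (\<rho> * K) powr \<beta> / real m powr \<beta>" using \<rho> Kp mpos by (simp add: powr_divide)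
    have m2: "real m powr (1 - \<beta>) = real m / real m powr \<beta>" using mpos by (simp add: powr_diff)
    show ?thesis unfolding Lb_def f1 m2 by (simp add: field_simps)
  qed
  have T1: "sN * (N / L) * (Z * c powr A) \<le> C"
  proof -
    have "sN * (N / L) * (Z * c powr A) = \<delta> powr A * Z * (x powr (\<gamma> * (1 - \<beta>)) / L)"
      using e1 unfolding x_def by (simp add: field_simps)
    also have "\<dots> \<le> \<delta> powr A * Z * (real m powr (1 - \<beta>) / Lb)"
    proof (intro mult_left_mono)
      have "x powr (\<gamma> * (1 - \<beta>)) / L \<le> real m powr (1 - \<beta>) / L" using xm Lpos by (simp add: divide_right_mono)
      also have "\<dots> \<le> real m powr (1 - \<beta>) / Lb" using Lb Lbpos by (intro divide_left_mono) auto
      finally show "x powr (\<gamma> * (1 - \<beta>)) / L \<le> real m powr (1 - \<beta>) / Lb" .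
    qed (use Z in auto)
    also have "real m powr (1 - \<beta>) / Lb = real K / (\<rho> * (\<rho> * real K) powr \<beta> * S)"
      unfolding Lbeq using mpos \<rho> Kp Spos by (simp add: field_simps)
    finally show ?thesis unfolding C_def Z_def S_def by simp
  qed
  have E2b: "E2 \<le> (real K)^2 / (\<rho> * real m * hfun \<rho>)"
  proof -
    have "E2 \<le> (\<Sum>s=2..K. real K / (\<rho> * real m * hfun \<rho>))" unfolding E2_def
    proof (rule sum_mono)
      fix s assume "s \<in> {2..K}"
      then have s: "2 \<le> s" "s \<le> K" by auto
      have pos: "\<rho> * m / K > 0" using \<rho> mpos Kp by simp
      have "1 / (real (n s) * hfun \<rho>) \<le> 1 / ((\<rho> * m / K) * hfun \<rho>)"
        using ns[OF s] pos hp by (intro divide_left_mono mult_right_mono mult_pos_pos) auto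
      also have "\<dots> = real K / (\<rho> * real m * hfun \<rho>)" using Kp by (simp add: field_simps)
      finally show "1 / (real (n s) * hfun \<rho>) \<le> real K / (\<rho> * real m * hfun \<rho>)" .
    qed
    also have "\<dots> = real (K - 1) * (real K / (\<rho> * real m * hfun \<rho>))" by simp
    also have "\<dots> \<le> real K * (real K / (\<rho> * real m * hfun \<rho>))"
      using \<rho> mpos hp Kp by (intro mult_right_mono) auto
    finally show ?thesis by (simp add: power2_eq_square)
  qed
  have T2: "sN * (N * c powr a) * E2 \<le> R"
  proof -
    have E2nn: "E2 \<ge> 0" unfolding E2_def using hp by (auto intro!: sum_nonneg)
    have "sN * (N * c powr a) * E2 \<le> \<delta> powr a * x powr (\<gamma> * (1 - \<beta>)) * ((real K)^2 / (\<rho> * real m * hfun \<rho>))"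
    proof -
      have "sN * (N * c powr a) * E2 = (sN * x * c powr a) * E2" unfolding x_def by simp
      also have "\<dots> \<le> \<delta> powr a * x powr (\<gamma> * (1 - \<beta>)) * E2" using e2 E2nn by (intro mult_right_mono)
      also have "\<dots> \<le> \<delta> powr a * x powr (\<gamma> * (1 - \<beta>)) * ((real K)^2 / (\<rho> * real m * hfun \<rho>))"
        using E2b by (intro mult_left_mono) auto
      finally show ?thesis .
    qed
    also have "\<dots> = \<delta> powr a * (real K)^2 / (\<rho> * hfun \<rho>) * (x powr (\<gamma> * (1 - \<beta>)) / real m)"
      by (simp add: field_simps)
    also have "x powr (\<gamma> * (1 - \<beta>)) / real m \<le> x powr (-\<gamma>*\<beta>)"
    proof -
      have "x powr (\<gamma> * (1 - \<beta>)) / real m \<le> x powr (\<gamma> * (1 - \<beta>)) / x powr \<gamma>"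
        using mge x1 mpos unfolding x_def by (intro divide_left_mono) auto
      also have "\<dots> = x powr (-\<gamma>*\<beta>)" using x1 by (simp add: powr_diff[symmetric] algebra_simps)
      finally show ?thesis .
    qed
    then have "\<delta> powr a * (real K)^2 / (\<rho> * hfun \<rho>) * (x powr (\<gamma> * (1 - \<beta>)) / real m)
        \<le> \<delta> powr a * (real K)^2 / (\<rho> * hfun \<rho>) * x powr (-\<gamma>*\<beta>)"
      using \<rho> hp by (intro mult_left_mono) auto
    finally show ?thesis unfolding R_def x_def .
  qed
  have E2nn: "E2 \<ge> 0" unfolding E2_def using hp by (auto intro!: sum_nonneg)
  have nn1: "sN \<ge> 0" "N / L \<ge> 0" "Z * c powr A \<ge> 0" "N * c powr a \<ge> 0"
    unfolding sN_def using Lpos Z by auto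
  have comb: "ennreal sN * (ennreal (N / L) * ennreal (Z * c powr A) + ennreal (N * c powr a) * ennreal E2)
     = ennreal (sN * (N / L) * (Z * c powr A) + sN * (N * c powr a) * E2)"
  proof -
    have X: "N / L * (Z * c powr A) \<ge> 0" "N * c powr a * E2 \<ge> 0"
      using mult_nonneg_nonneg[OF nn1(2,3)] mult_nonneg_nonneg[OF nn1(4) E2nn] by auto
    have "ennreal (N / L) * ennreal (Z * c powr A) = ennreal (N / L * (Z * c powr A))"
      using nn1(2,3) by (rule ennreal_mult[symmetric])
    moreover have "ennreal (N * c powr a) * ennreal E2 = ennreal (N * c powr a * E2)"
      using nn1(4) E2nn by (rule ennreal_mult[symmetric])
    moreover have "ennreal (N / L * (Z * c powr A)) + ennreal (N * c powr a * E2) = ennreal (N / L * (Z * c powr A) + N * c powr a * E2)"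
      using X by (rule ennreal_plus[symmetric])
    moreover have "ennreal sN * ennreal (N / L * (Z * c powr A) + N * c powr a * E2) = ennreal (sN * (N / L * (Z * c powr A) + N * c powr a * E2))"
      using nn1 X by (intro ennreal_mult[symmetric]) auto
    ultimately show ?thesis by (simp add: distrib_left mult.assoc)
  qed
  have fin: "ennreal (sN * (N / L) * (Z * c powr A) + sN * (N * c powr a) * E2) \<le> ennreal (C + R)"
    using T1 T2 by (intro ennreal_leI) simp
  show "ennreal (real N powr (- chi * \<beta> + b * A)) *
        (\<integral>\<^sup>+ \<omega>. ennreal (\<Sum>xs\<in>wor_lists (nat \<lceil>real N powr \<gamma>\<rceil>) N.
            wor_prob (desc_atom (Xi \<omega>)) \<beta> (nat \<lceil>real N powr \<gamma>\<rceil>) xs *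
            (\<Sum>k<N. desc_atom (Xi \<omega>) (xs ! k) powr a *
               indicator {..\<delta> * real N powr (- b)} (desc_atom (Xi \<omega>) (xs ! k)))) \<partial>P) \<le> ennreal (C + R)"
    unfolding m_def[symmetric] c_def[symmetric] sN_def[symmetric]
    using order.trans[OF mult_left_mono[OF ME(1)] order.trans[OF eq_refl[OF comb] fin]] by simp
  show "ennreal (real N powr (- chi * \<beta> + b * A)) *
        (\<integral>\<^sup>+ \<omega>. ennreal (\<Sum>xs\<in>wr_lists (nat \<lceil>real N powr \<gamma>\<rceil>) N.
            wr_prob (desc_atom (Xi \<omega>)) \<beta> (nat \<lceil>real N powr \<gamma>\<rceil>) xs *
            (\<Sum>k<N. desc_atom (Xi \<omega>) (xs ! k) powr a *
               indicator {..\<delta> * real N powr (- b)} (desc_atom (Xi \<omega>) (xs ! k)))) \<partial>P) \<le> ennreal (C + R)"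
    unfolding m_def[symmetric] c_def[symmetric] sN_def[symmetric]
    using order.trans[OF mult_left_mono[OF ME(2)] order.trans[OF eq_refl[OF comb] fin]] by simp
qed

end

lemma eventually_pow_big:
  fixes \<gamma> B :: real assumes "\<gamma> > 1"
  shows "eventually (\<lambda>N::nat. real N powr \<gamma> \<ge> B * real N) sequentially"
proof -
  have lim: "((\<lambda>N::nat. real N powr (-(\<gamma>-1))) \<longlongrightarrow> 0) sequentially"
    using assms by (intro tendsto_neg_powr filterlim_real_sequentially) auto
  define B' where "B' = max B 1"
  have "eventually (\<lambda>N::nat. real N powr (-(\<gamma>-1)) < 1 / B') sequentially"
    using lim by (rule order_tendstoD) (simp add: B'_def)
  moreover have "eventually (\<lambda>N::nat. N \<ge> 1) sequentially" by (rule eventually_ge_at_top)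
  ultimately show ?thesis
  proof eventually_elim
    case (elim N)
    have Np: "real N > 0" using elim by simp
    have B'p: "B' > 0" unfolding B'_def by simp
    have "real N powr (-(\<gamma>-1)) = 1 / real N powr (\<gamma>-1)" by (subst powr_minus) (simp add: divide_inverse)
    then have "1 / real N powr (\<gamma>-1) < 1 / B'" using elim by simp
    moreover have xp: "real N powr (\<gamma>-1) > 0" using Np by simp
    ultimately have "B' < real N powr (\<gamma>-1)" using B'p by (simp add: field_simps)
    then have "B' * real N \<le> real N powr (\<gamma>-1) * real N" using Np by simp
    also have "real N powr (\<gamma>-1) * real N = real N powr \<gamma>" using Np by (simp add: powr_diff)
    finally show ?case unfolding B'_def using Np by (smt (verit) mult_right_mono)
  qed
qed

context ppp begin

lemma param_bound:
  fixes \<gamma> \<beta> chi a b \<delta> A \<rho> q :: real and K :: nat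
  assumes \<gamma>: "\<gamma> > 1" and \<beta>: "0 < \<beta>" "\<beta> < 1" and chi: "chi = (1 - \<gamma> * (1 - \<beta>)) / \<beta>"
    and a: "a > 0" and b: "b \<ge> 0" and \<delta>: "\<delta> > 0" and Adef: "A = a + \<beta> - 1" and A: "A > 0"
    and \<rho>: "0 < \<rho>" "\<rho> < 1" and q: "0 < q" "q < 1" and K: "K \<ge> 2"
  defines "C \<equiv> \<delta> powr A * ((1-q) * q powr (-(a+\<beta>)) / (1 - q powr A)) *
      (real K / (\<rho> * (\<rho> * real K) powr \<beta> * (\<Sum>r=2..K. real r powr (-\<beta>))))"
  shows "limsup (\<lambda>N::nat. ennreal (real N powr (- chi * \<beta> + b * A)) *
        (\<integral>\<^sup>+ \<omega>. ennreal (\<Sum>xs\<in>wor_lists (nat \<lceil>real N powr \<gamma>\<rceil>) N.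
            wor_prob (desc_atom (Xi \<omega>)) \<beta> (nat \<lceil>real N powr \<gamma>\<rceil>) xs *
            (\<Sum>k<N. desc_atom (Xi \<omega>) (xs ! k) powr a *
               indicator {..\<delta> * real N powr (- b)} (desc_atom (Xi \<omega>) (xs ! k)))) \<partial>P)) \<le> ennreal C"
    "limsup (\<lambda>N::nat. ennreal (real N powr (- chi * \<beta> + b * A)) *
        (\<integral>\<^sup>+ \<omega>. ennreal (\<Sum>xs\<in>wr_lists (nat \<lceil>real N powr \<gamma>\<rceil>) N.
            wr_prob (desc_atom (Xi \<omega>)) \<beta> (nat \<lceil>real N powr \<gamma>\<rceil>) xs *
            (\<Sum>k<N. desc_atom (Xi \<omega>) (xs ! k) powr a *
               indicator {..\<delta> * real N powr (- b)} (desc_atom (Xi \<omega>) (xs ! k)))) \<partial>P)) \<le> ennreal C"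
proof -
  have hp: "hfun \<rho> > 0" using hfun_pos \<rho> by simp
  have Kp: "real K > 0" using K by simp
  define D where "D = \<delta> powr a * (real K)^2 / (\<rho> * hfun \<rho>)"
  have Dp: "D > 0" unfolding D_def using \<delta> hp \<rho> Kp by simp
  have ev: "eventually (\<lambda>N::nat. N \<ge> 1 \<and> real (nat \<lceil>real N powr \<gamma>\<rceil>) \<ge> real K * real N + real K / (1 - \<rho>)
      \<and> D * real N powr (-\<gamma>*\<beta>) \<le> e) sequentially" if e: "e > 0" for e
  proof -
    have lim: "((\<lambda>N::nat. real N powr (-\<gamma>*\<beta>)) \<longlongrightarrow> 0) sequentially"
      using \<gamma> \<beta> by (intro tendsto_neg_powr filterlim_real_sequentially) auto
    have e1: "eventually (\<lambda>N::nat. real N powr (-\<gamma>*\<beta>) < e / D) sequentially"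
      using lim by (rule order_tendstoD) (use e Dp in simp)
    have e2: "eventually (\<lambda>N::nat. real N powr \<gamma> \<ge> (real K + real K / (1 - \<rho>)) * real N) sequentially"
      by (rule eventually_pow_big[OF \<gamma>])
    have e3: "eventually (\<lambda>N::nat. N \<ge> 1) sequentially" by (rule eventually_ge_at_top)
    show ?thesis using e1 e2 e3
    proof eventually_elim
      case (elim N)
      have Np: "real N \<ge> 1" using elim by simp
      have K': "real K / (1 - \<rho>) \<ge> 0" using \<rho> Kp by simp
      have "real K / (1 - \<rho>) * 1 \<le> real K / (1 - \<rho>) * real N" using Np K' by (intro mult_left_mono) auto
      then have "real K * real N + real K / (1 - \<rho>) \<le> (real K + real K / (1 - \<rho>)) * real N"
        by (simp add: algebra_simps)
      also have "\<dots> \<le> real N powr \<gamma>" using elim by simp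
      also have "\<dots> \<le> real (nat \<lceil>real N powr \<gamma>\<rceil>)" by linarith
      finally have m: "real K * real N + real K / (1 - \<rho>) \<le> real (nat \<lceil>real N powr \<gamma>\<rceil>)" .
      have "D * real N powr (-\<gamma>*\<beta>) \<le> e" using elim Dp by (simp add: field_simps)
      then show ?case using m elim by simp
    qed
  qed
  have C0: "C \<ge> 0"
  proof -
    have "q powr A < 1" using powr_less_mono2[OF A, of q 1] q by simp
    moreover have "(\<Sum>r=2..K. real r powr (-\<beta>)) \<ge> 0" by (intro sum_nonneg) simp
    ultimately have "(1-q) * q powr (-(a+\<beta>)) / (1 - q powr A) \<ge> 0" "real K / (\<rho> * (\<rho> * real K) powr \<beta> * (\<Sum>r=2..K. real r powr (-\<beta>))) \<ge> 0"
      using q \<rho> Kp by auto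
    then show ?thesis unfolding C_def by (intro mult_nonneg_nonneg) auto
  qed
  show "limsup (\<lambda>N::nat. ennreal (real N powr (- chi * \<beta> + b * A)) *
        (\<integral>\<^sup>+ \<omega>. ennreal (\<Sum>xs\<in>wor_lists (nat \<lceil>real N powr \<gamma>\<rceil>) N.
            wor_prob (desc_atom (Xi \<omega>)) \<beta> (nat \<lceil>real N powr \<gamma>\<rceil>) xs *
            (\<Sum>k<N. desc_atom (Xi \<omega>) (xs ! k) powr a *
               indicator {..\<delta> * real N powr (- b)} (desc_atom (Xi \<omega>) (xs ! k)))) \<partial>P)) \<le> ennreal C"
  proof (rule ennreal_le_epsilon)
    fix e :: real assume e: "0 < e"
    have "limsup (\<lambda>N::nat. ennreal (real N powr (- chi * \<beta> + b * A)) *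
        (\<integral>\<^sup>+ \<omega>. ennreal (\<Sum>xs\<in>wor_lists (nat \<lceil>real N powr \<gamma>\<rceil>) N.
            wor_prob (desc_atom (Xi \<omega>)) \<beta> (nat \<lceil>real N powr \<gamma>\<rceil>) xs *
            (\<Sum>k<N. desc_atom (Xi \<omega>) (xs ! k) powr a *
               indicator {..\<delta> * real N powr (- b)} (desc_atom (Xi \<omega>) (xs ! k)))) \<partial>P)) \<le> ennreal (C + e)"
    proof (rule Limsup_bounded)
      show "eventually (\<lambda>N::nat. ennreal (real N powr (- chi * \<beta> + b * A)) *
        (\<integral>\<^sup>+ \<omega>. ennreal (\<Sum>xs\<in>wor_lists (nat \<lceil>real N powr \<gamma>\<rceil>) N.
            wor_prob (desc_atom (Xi \<omega>)) \<beta> (nat \<lceil>real N powr \<gamma>\<rceil>) xs *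
            (\<Sum>k<N. desc_atom (Xi \<omega>) (xs ! k) powr a *
               indicator {..\<delta> * real N powr (- b)} (desc_atom (Xi \<omega>) (xs ! k)))) \<partial>P) \<le> ennreal (C + e)) sequentially"
        using ev[OF e]
      proof eventually_elim
        case (elim N)
        have "ennreal (real N powr (- chi * \<beta> + b * A)) *
        (\<integral>\<^sup>+ \<omega>. ennreal (\<Sum>xs\<in>wor_lists (nat \<lceil>real N powr \<gamma>\<rceil>) N.
            wor_prob (desc_atom (Xi \<omega>)) \<beta> (nat \<lceil>real N powr \<gamma>\<rceil>) xs *
            (\<Sum>k<N. desc_atom (Xi \<omega>) (xs ! k) powr a *
               indicator {..\<delta> * real N powr (- b)} (desc_atom (Xi \<omega>) (xs ! k)))) \<partial>P) \<le> ennreal (C + D * real N powr (-\<gamma>*\<beta>))"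
          unfolding C_def D_def by (rule step_N(1)[OF \<gamma> \<beta> chi a b \<delta> Adef A \<rho> q K]) (use elim in auto)
        also have "\<dots> \<le> ennreal (C + e)" using elim by (intro ennreal_leI) simp
        finally show ?case .
      qed
    qed
    also have "\<dots> = ennreal C + ennreal e" using C0 e by (simp add: ennreal_plus)
    finally show "limsup (\<lambda>N::nat. ennreal (real N powr (- chi * \<beta> + b * A)) *
        (\<integral>\<^sup>+ \<omega>. ennreal (\<Sum>xs\<in>wor_lists (nat \<lceil>real N powr \<gamma>\<rceil>) N.
            wor_prob (desc_atom (Xi \<omega>)) \<beta> (nat \<lceil>real N powr \<gamma>\<rceil>) xs *
            (\<Sum>k<N. desc_atom (Xi \<omega>) (xs ! k) powr a *
               indicator {..\<delta> * real N powr (- b)} (desc_atom (Xi \<omega>) (xs ! k)))) \<partial>P)) \<le> ennreal C + ennreal e" .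
  qed
  show "limsup (\<lambda>N::nat. ennreal (real N powr (- chi * \<beta> + b * A)) *
        (\<integral>\<^sup>+ \<omega>. ennreal (\<Sum>xs\<in>wr_lists (nat \<lceil>real N powr \<gamma>\<rceil>) N.
            wr_prob (desc_atom (Xi \<omega>)) \<beta> (nat \<lceil>real N powr \<gamma>\<rceil>) xs *
            (\<Sum>k<N. desc_atom (Xi \<omega>) (xs ! k) powr a *
               indicator {..\<delta> * real N powr (- b)} (desc_atom (Xi \<omega>) (xs ! k)))) \<partial>P)) \<le> ennreal C"
  proof (rule ennreal_le_epsilon)
    fix e :: real assume e: "0 < e"
    have "limsup (\<lambda>N::nat. ennreal (real N powr (- chi * \<beta> + b * A)) *
        (\<integral>\<^sup>+ \<omega>. ennreal (\<Sum>xs\<in>wr_lists (nat \<lceil>real N powr \<gamma>\<rceil>) N.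
            wr_prob (desc_atom (Xi \<omega>)) \<beta> (nat \<lceil>real N powr \<gamma>\<rceil>) xs *
            (\<Sum>k<N. desc_atom (Xi \<omega>) (xs ! k) powr a *
               indicator {..\<delta> * real N powr (- b)} (desc_atom (Xi \<omega>) (xs ! k)))) \<partial>P)) \<le> ennreal (C + e)"
    proof (rule Limsup_bounded)
      show "eventually (\<lambda>N::nat. ennreal (real N powr (- chi * \<beta> + b * A)) *
        (\<integral>\<^sup>+ \<omega>. ennreal (\<Sum>xs\<in>wr_lists (nat \<lceil>real N powr \<gamma>\<rceil>) N.
            wr_prob (desc_atom (Xi \<omega>)) \<beta> (nat \<lceil>real N powr \<gamma>\<rceil>) xs *
            (\<Sum>k<N. desc_atom (Xi \<omega>) (xs ! k) powr a *
               indicator {..\<delta> * real N powr (- b)} (desc_atom (Xi \<omega>) (xs ! k)))) \<partial>P) \<le> ennreal (C + e)) sequentially"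
        using ev[OF e]
      proof eventually_elim
        case (elim N)
        have "ennreal (real N powr (- chi * \<beta> + b * A)) *
        (\<integral>\<^sup>+ \<omega>. ennreal (\<Sum>xs\<in>wr_lists (nat \<lceil>real N powr \<gamma>\<rceil>) N.
            wr_prob (desc_atom (Xi \<omega>)) \<beta> (nat \<lceil>real N powr \<gamma>\<rceil>) xs *
            (\<Sum>k<N. desc_atom (Xi \<omega>) (xs ! k) powr a *
               indicator {..\<delta> * real N powr (- b)} (desc_atom (Xi \<omega>) (xs ! k)))) \<partial>P) \<le> ennreal (C + D * real N powr (-\<gamma>*\<beta>))"
          unfolding C_def D_def by (rule step_N(2)[OF \<gamma> \<beta> chi a b \<delta> Adef A \<rho> q K]) (use elim in auto)
        also have "\<dots> \<le> ennreal (C + e)" using elim by (intro ennreal_leI) simp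
        finally show ?case .
      qed
    qed
    also have "\<dots> = ennreal C + ennreal e" using C0 e by (simp add: ennreal_plus)
    finally show "limsup (\<lambda>N::nat. ennreal (real N powr (- chi * \<beta> + b * A)) *
        (\<integral>\<^sup>+ \<omega>. ennreal (\<Sum>xs\<in>wr_lists (nat \<lceil>real N powr \<gamma>\<rceil>) N.
            wr_prob (desc_atom (Xi \<omega>)) \<beta> (nat \<lceil>real N powr \<gamma>\<rceil>) xs *
            (\<Sum>k<N. desc_atom (Xi \<omega>) (xs ! k) powr a *
               indicator {..\<delta> * real N powr (- b)} (desc_atom (Xi \<omega>) (xs ! k)))) \<partial>P)) \<le> ennreal C + ennreal e" .
  qed
qed


end

lemma C_le_U:
  fixes \<beta> \<rho> :: real and K :: nat
  assumes \<beta>: "0 < \<beta>" "\<beta> < 1" and \<rho>: "0 < \<rho>" and K: "K \<ge> 3"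
  shows "real K / (\<rho> * (\<rho> * real K) powr \<beta> * (\<Sum>r=2..K. real r powr (-\<beta>)))
     \<le> (1-\<beta>) / (\<rho> powr (1+\<beta>) * (1 - (2 / real K) powr (1-\<beta>)))"
proof -
  define k where "k = real K"
  have k: "k \<ge> 3" unfolding k_def using K by simp
  define Sb where "Sb = (k powr (1-\<beta>) - 2 powr (1-\<beta>)) / (1-\<beta>)"
  have S1: "((k + 1) powr (1-\<beta>) - 2 powr (1-\<beta>)) / (1-\<beta>) \<le> (\<Sum>r=2..K. real r powr (-\<beta>))"
    unfolding k_def using sum_powr_lower[OF \<beta>, of K] K by simp
  have "k powr (1-\<beta>) \<le> (k+1) powr (1-\<beta>)" using k \<beta> by (intro powr_mono2) auto
  then have Sb_le: "Sb \<le> (\<Sum>r=2..K. real r powr (-\<beta>))" using S1 \<beta> unfolding Sb_def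
    by (smt (verit) divide_right_mono)
  have k2: "2 powr (1-\<beta>) < k powr (1-\<beta>)" using k \<beta> by (intro powr_less_mono2) auto
  have Sbpos: "Sb > 0" unfolding Sb_def using k2 \<beta> by simp
  have r1: "(2 / k) powr (1-\<beta>) = 2 powr (1-\<beta>) / k powr (1-\<beta>)" using k by (simp add: powr_divide)
  have kp: "k powr (1-\<beta>) > 0" using k by simp
  have P: "\<rho> * (\<rho> * k) powr \<beta> > 0" using \<rho> k by simp
  have "k / (\<rho> * (\<rho> * k) powr \<beta> * (\<Sum>r=2..K. real r powr (-\<beta>))) \<le> k / (\<rho> * (\<rho> * k) powr \<beta> * Sb)"
    using Sb_le Sbpos P k \<rho> by (intro divide_left_mono mult_left_mono mult_pos_pos) auto
  also have "\<dots> = (1-\<beta>) / (\<rho> powr (1+\<beta>) * (1 - (2 / k) powr (1-\<beta>)))"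
  proof -
    have a1: "(\<rho> * k) powr \<beta> = \<rho> powr \<beta> * k powr \<beta>" using \<rho> k by (simp add: powr_mult)
    have a2: "\<rho> powr (1+\<beta>) = \<rho> * \<rho> powr \<beta>" using \<rho> by (simp add: powr_add)
    have a3: "k powr (1-\<beta>) = k / k powr \<beta>" using k by (simp add: powr_diff)
    have kb: "k powr \<beta> > 0" using k by simp
    have ne: "k powr (1-\<beta>) - 2 powr (1-\<beta>) \<noteq> 0" using k2 by simp
    show ?thesis unfolding Sb_def r1 a1 a2 using \<beta> \<rho> kp kb ne k
      by (simp add: field_simps a3)
  qed
  finally show ?thesis unfolding k_def .
qed

definition qq :: "nat \<Rightarrow> real" where "qq j = 1 - 1 / (real j + 2)"

lemma qq_props: "0 < qq j" "qq j < 1"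
  unfolding qq_def by (auto simp: field_simps)

lemma qq_lim: "qq \<longlonglongrightarrow> 1"
proof -
  have "(\<lambda>j. 1 / real (j+2)) \<longlonglongrightarrow> 0"
    by (intro tendsto_divide_0[OF tendsto_const] filterlim_at_top_imp_at_infinity
        filterlim_compose[OF filterlim_real_sequentially filterlim_add_const_nat_at_top])
  then have "(\<lambda>j. 1 / (real j + 2)) \<longlonglongrightarrow> 0" by (simp add: add.commute)
  then have "(\<lambda>j. 1 - 1 / (real j + 2)) \<longlonglongrightarrow> 1 - 0" by (intro tendsto_intros)
  then show ?thesis unfolding qq_def by simp
qed

lemma Z_lim:
  fixes A e :: real assumes A: "A > 0"
  shows "(\<lambda>j. (1 - qq j) * qq j powr (-e) / (1 - qq j powr A)) \<longlonglongrightarrow> 1 / A"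
proof -
  have d: "((\<lambda>q::real. q powr A) has_field_derivative A) (at 1)"
    by (auto intro!: derivative_eq_intros)
  then have "((\<lambda>y. (y powr A - 1 powr A) / (y - 1)) \<longlongrightarrow> A) (at 1)"
    unfolding has_field_derivative_iff .
  moreover have "filterlim qq (at 1) sequentially"
    using qq_lim qq_props(2) by (intro filterlim_atI) (auto intro: always_eventually simp: less_le)
  ultimately have D: "(\<lambda>j. (qq j powr A - 1) / (qq j - 1)) \<longlonglongrightarrow> A"
    using filterlim_compose by fastforce
  have P: "(\<lambda>j. qq j powr (-e)) \<longlonglongrightarrow> 1 powr (-e)"
    using qq_lim by (intro tendsto_powr) auto
  have "(\<lambda>j. qq j powr (-e) / ((qq j powr A - 1) / (qq j - 1))) \<longlonglongrightarrow> 1 powr (-e) / A"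
    using P D A by (intro tendsto_divide) auto
  moreover have "qq j powr (-e) / ((qq j powr A - 1) / (qq j - 1)) = (1 - qq j) * qq j powr (-e) / (1 - qq j powr A)" for j
  proof -
    have "qq j - 1 \<noteq> 0" using qq_props(2)[of j] by simp
    moreover have "qq j powr A - 1 \<noteq> 0"
      using powr_less_mono2[OF A, of "qq j" 1] qq_props[of j] A by simp
    ultimately show ?thesis by (simp add: field_simps)
  qed
  ultimately show ?thesis by simp
qed

lemma U_lim:
  fixes A \<beta> a \<delta> :: real assumes A: "A > 0" and \<beta>: "0 < \<beta>" "\<beta> < 1"
  shows "(\<lambda>j. \<delta> powr A * ((1 - qq j) * qq j powr (-(a+\<beta>)) / (1 - qq j powr A)) *
      ((1-\<beta>) / (qq j powr (1+\<beta>) * (1 - (2 / real (j+3)) powr (1-\<beta>))))) \<longlonglongrightarrow>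
      \<delta> powr A * (1/A) * ((1-\<beta>) / (1 powr (1+\<beta>) * (1 - 0)))"
proof -
  have t: "(\<lambda>j. 2 / real (j+3)) \<longlonglongrightarrow> 0"
    by (intro tendsto_divide_0[OF tendsto_const] filterlim_at_top_imp_at_infinity
        filterlim_compose[OF filterlim_real_sequentially filterlim_add_const_nat_at_top])
  have t2: "(\<lambda>j. (2 / real (j+3)) powr (1-\<beta>)) \<longlonglongrightarrow> 0"
    by (rule tendsto_zero_powrI[OF t tendsto_const]) (use \<beta> in auto)
  have p: "(\<lambda>j. qq j powr (1+\<beta>)) \<longlonglongrightarrow> 1 powr (1+\<beta>)"
    using qq_lim by (intro tendsto_powr) auto
  have den: "(\<lambda>j. qq j powr (1+\<beta>) * (1 - (2 / real (j+3)) powr (1-\<beta>))) \<longlonglongrightarrow> 1 powr (1+\<beta>) * (1 - 0)"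
    by (rule tendsto_mult[OF p tendsto_diff[OF tendsto_const t2]])
  have fr: "(\<lambda>j. (1-\<beta>) / (qq j powr (1+\<beta>) * (1 - (2 / real (j+3)) powr (1-\<beta>)))) \<longlonglongrightarrow> (1-\<beta>) / (1 powr (1+\<beta>) * (1 - 0))"
    by (rule tendsto_divide[OF tendsto_const den]) simp
  show ?thesis
    by (rule tendsto_mult[OF tendsto_mult[OF tendsto_const Z_lim[OF A, of "a+\<beta>"]] fr])
qed

lemma le_from_seq:
  fixes l :: ennreal and U :: "nat \<Rightarrow> real" and T :: real
  assumes "\<And>j. l \<le> ennreal (U j)" "U \<longlonglongrightarrow> T" "T \<ge> 0"
  shows "l \<le> ennreal T"
proof (rule ennreal_le_epsilon)
  fix e :: real assume e: "0 < e"
  have "eventually (\<lambda>j. U j < T + e) sequentially" using assms(2) by (rule order_tendstoD) (use e in simp)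
  then obtain j where "U j < T + e" by (metis eventually_sequentially order.refl)
  then have "l \<le> ennreal (T + e)" using assms(1)[of j] by (meson ennreal_leI less_imp_le order_trans)
  also have "\<dots> = ennreal T + ennreal e" using assms(3) e by (simp add: ennreal_plus)
  finally show "l \<le> ennreal T + ennreal e" .
qed

context ppp begin

lemma final:
  fixes \<gamma> \<beta> chi a b \<delta> A :: real
  assumes \<gamma>: "\<gamma> > 1" and \<beta>: "0 < \<beta>" "\<beta> < 1" and chi: "chi = (1 - \<gamma> * (1 - \<beta>)) / \<beta>"
    and a: "a > 0" and b: "b \<ge> 0" and \<delta>: "\<delta> > 0" and Adef: "A = a + \<beta> - 1" and A: "A > 0"
  shows "limsup (\<lambda>N::nat. ennreal (real N powr (- chi * \<beta> + b * A)) *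
        (\<integral>\<^sup>+ \<omega>. ennreal (\<Sum>xs\<in>wor_lists (nat \<lceil>real N powr \<gamma>\<rceil>) N.
            wor_prob (desc_atom (Xi \<omega>)) \<beta> (nat \<lceil>real N powr \<gamma>\<rceil>) xs *
            (\<Sum>k<N. desc_atom (Xi \<omega>) (xs ! k) powr a *
               indicator {..\<delta> * real N powr (- b)} (desc_atom (Xi \<omega>) (xs ! k)))) \<partial>P))
      \<le> ennreal ((1 - \<beta>) * \<delta> powr A / A)
   \<and> limsup (\<lambda>N::nat. ennreal (real N powr (- chi * \<beta> + b * A)) *
        (\<integral>\<^sup>+ \<omega>. ennreal (\<Sum>xs\<in>wr_lists (nat \<lceil>real N powr \<gamma>\<rceil>) N.
            wr_prob (desc_atom (Xi \<omega>)) \<beta> (nat \<lceil>real N powr \<gamma>\<rceil>) xs *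
            (\<Sum>k<N. desc_atom (Xi \<omega>) (xs ! k) powr a *
               indicator {..\<delta> * real N powr (- b)} (desc_atom (Xi \<omega>) (xs ! k)))) \<partial>P))
      \<le> ennreal ((1 - \<beta>) * \<delta> powr A / A)"
proof -
  define U where "U j = \<delta> powr A * ((1 - qq j) * qq j powr (-(a+\<beta>)) / (1 - qq j powr A)) *
      ((1-\<beta>) / (qq j powr (1+\<beta>) * (1 - (2 / real (j+3)) powr (1-\<beta>))))" for j
  have UL: "U \<longlonglongrightarrow> (1 - \<beta>) * \<delta> powr A / A"
    using U_lim[OF A \<beta>, of \<delta> a] unfolding U_def by (simp add: mult.commute)
  have T0: "(1 - \<beta>) * \<delta> powr A / A \<ge> 0" using \<beta> A by simp
  have CU: "\<delta> powr A * ((1-qq j) * qq j powr (-(a+\<beta>)) / (1 - qq j powr A)) *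
      (real (j+3) / (qq j * (qq j * real (j+3)) powr \<beta> * (\<Sum>r=2..j+3. real r powr (-\<beta>)))) \<le> U j" for j
  proof -
    have "qq j powr A < 1" using powr_less_mono2[OF A, of "qq j" 1] qq_props[of j] by simp
    then have Z0: "\<delta> powr A * ((1-qq j) * qq j powr (-(a+\<beta>)) / (1 - qq j powr A)) \<ge> 0"
      using qq_props[of j] by simp
    show ?thesis unfolding U_def
      by (rule mult_left_mono[OF C_le_U[OF \<beta> qq_props(1)] Z0]) simp
  qed
  have pb: "limsup (\<lambda>N::nat. ennreal (real N powr (- chi * \<beta> + b * A)) *
        (\<integral>\<^sup>+ \<omega>. ennreal (\<Sum>xs\<in>wor_lists (nat \<lceil>real N powr \<gamma>\<rceil>) N.
            wor_prob (desc_atom (Xi \<omega>)) \<beta> (nat \<lceil>real N powr \<gamma>\<rceil>) xs *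
            (\<Sum>k<N. desc_atom (Xi \<omega>) (xs ! k) powr a *
               indicator {..\<delta> * real N powr (- b)} (desc_atom (Xi \<omega>) (xs ! k)))) \<partial>P)) \<le> ennreal (U j)
      \<and> limsup (\<lambda>N::nat. ennreal (real N powr (- chi * \<beta> + b * A)) *
        (\<integral>\<^sup>+ \<omega>. ennreal (\<Sum>xs\<in>wr_lists (nat \<lceil>real N powr \<gamma>\<rceil>) N.
            wr_prob (desc_atom (Xi \<omega>)) \<beta> (nat \<lceil>real N powr \<gamma>\<rceil>) xs *
            (\<Sum>k<N. desc_atom (Xi \<omega>) (xs ! k) powr a *
               indicator {..\<delta> * real N powr (- b)} (desc_atom (Xi \<omega>) (xs ! k)))) \<partial>P)) \<le> ennreal (U j)" for j
  proof -
    have K: "j + 3 \<ge> (2::nat)" by simp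
    note P = param_bound[OF \<gamma> \<beta> chi a b \<delta> Adef A qq_props qq_props K]
    have e: "ennreal (\<delta> powr A * ((1-qq j) * qq j powr (-(a+\<beta>)) / (1 - qq j powr A)) *
      (real (j+3) / (qq j * (qq j * real (j+3)) powr \<beta> * (\<Sum>r=2..j+3. real r powr (-\<beta>))))) \<le> ennreal (U j)"
      using CU[of j] by (rule ennreal_leI)
    show ?thesis using order.trans[OF P(1) e] order.trans[OF P(2) e] by simp
  qed
  show ?thesis
    using le_from_seq[OF conjunct1[OF pb] UL T0] le_from_seq[OF conjunct2[OF pb] UL T0] by simp
qed

end


theorem corollary4p4:
  fixes P :: "'a measure" and Xi :: "'a \<Rightarrow> real set"
    and \<gamma> \<beta> chi a b \<delta> A :: real
  assumes "\<gamma> > 1" and "0 < \<beta>" and "\<beta> < 1"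
    and "chi = (1 - \<gamma> * (1 - \<beta>)) / \<beta>"
    and "prob_space P"
    and "poisson_point_process P Xi inv_sq_intensity"
    and "a > 0" and "b \<ge> 0" and "\<delta> > 0"
    and "A = a + \<beta> - 1" and "A > 0"
  shows
    "limsup (\<lambda>N::nat. ennreal (real N powr (- chi * \<beta> + b * A)) *
        (\<integral>\<^sup>+ \<omega>. ennreal (\<Sum>xs\<in>wor_lists (nat \<lceil>real N powr \<gamma>\<rceil>) N.
            wor_prob (desc_atom (Xi \<omega>)) \<beta> (nat \<lceil>real N powr \<gamma>\<rceil>) xs *
            (\<Sum>k<N. desc_atom (Xi \<omega>) (xs ! k) powr a *
               indicator {..\<delta> * real N powr (- b)} (desc_atom (Xi \<omega>) (xs ! k)))) \<partial>P))
      \<le> ennreal ((1 - \<beta>) * \<delta> powr A / A)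
   \<and> limsup (\<lambda>N::nat. ennreal (real N powr (- chi * \<beta> + b * A)) *
        (\<integral>\<^sup>+ \<omega>. ennreal (\<Sum>xs\<in>wr_lists (nat \<lceil>real N powr \<gamma>\<rceil>) N.
            wr_prob (desc_atom (Xi \<omega>)) \<beta> (nat \<lceil>real N powr \<gamma>\<rceil>) xs *
            (\<Sum>k<N. desc_atom (Xi \<omega>) (xs ! k) powr a *
               indicator {..\<delta> * real N powr (- b)} (desc_atom (Xi \<omega>) (xs ! k)))) \<partial>P))
      \<le> ennreal ((1 - \<beta>) * \<delta> powr A / A)"
proof -
  interpret ppp P Xi by (intro ppp.intro ppp_axioms.intro assms(5) assms(6))
  show ?thesis by (rule final[OF assms(1,2,3,4,7,8,9,10,11)])
qed

end
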